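(* Let $\mathcal{H} = \bigotimes_i \mathcal{H}_i$ and let $H_{\mathrm{else}} = \sum_i h_i$ be a $k$-local Hamiltonian on $\mathcal{H}$ with $\|h_i\| = O(1)$ whose interaction graph has degree bounded by an $O(1)$ constant. Introduce an ancillary qubit $\mathcal{A} = \mathbb{C}^2$ and let $$H' = H_{\mathbb{I}}\otimes\mathbb{I} + H_X\otimes X + H_{|1\rangle\langle1|}\otimes|1\rangle\langle 1| \in \mathrm{Herm}(\mathcal{H}\otimes\mathcal{A}),$$ where $H_{\mathbb{I}}, H_X, H_{|1\rangle\langle1|} \in \mathrm{Herm}(\mathcal{H})$ depend on a small parameter $\delta t > 0$, act on $O(1)$ sites of $\mathcal{H}$, and satisfy $\|H_{\mathbb{I}}\| = O(1)$, $\|H_X\| = O((\delta t)^{-1/2})$, $\|H_{|1\rangle\langle1|}\| = O((\delta t)^{-1})$, and $H_{|1\rangle\langle1|}^2 = \omega^2\mathbb{I}$ with $\omega = 2\pi/\delta t$. Then for every $|\psi\rangle \in \mathcal{H}$, $$e^{-i\delta t(H' + H_{\mathrm{else}}\otimes\mathbb{I})}(|\psi\rangle\otimes|0\rangle) = \big(e^{-i\delta t(H+H_{\mathrm{else}})}|\psi\rangle + O((\delta t)^2)\big)\otimes|0\rangle + O((\delta t)^{3/2})\otimes|1\rangle,$$ where $H = H_{\mathbb{I}} - \omega^{-2}H_X H_{|1\rangle\langle1|}H_X$.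
   Context: A Hamiltonian is $k$-local if it is a sum of terms each acting nontrivially on at most $k$ sites; its interaction (hyper)graph has the sites as vertices and supports of the terms as edges. $X$ is the Pauli $X$ on the ancilla, $\|\cdot\|$ the operator norm. Asymptotic notation refers to $\delta t\to 0$, with implicit constants independent of the number of sites; a term $O(f)\otimes|b\rangle$ denotes a vector $|\phi\rangle\otimes|b\rangle$ with $\||\phi\rangle\| = O(f)$. *)

theory Defs
  imports Complex_Main
begin

text \<open>Finite-dimensional linear algebra over a finite index set I.
  Matrices and vectors are functions on the index type; only values on I matter.\<close>

type_synonym 'a cmat = "'a \<Rightarrow> 'a \<Rightarrow> complex"
type_synonym 'a cvec = "'a \<Rightarrow> complex"

definition mid :: "'a cmat" where
  "mid = (\<lambda>x y. if x = y then 1 else 0)"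

definition madd :: "'a cmat \<Rightarrow> 'a cmat \<Rightarrow> 'a cmat" where
  "madd A B = (\<lambda>x y. A x y + B x y)"

definition msmul :: "complex \<Rightarrow> 'a cmat \<Rightarrow> 'a cmat" where
  "msmul c A = (\<lambda>x y. c * A x y)"

definition mmul :: "'a set \<Rightarrow> 'a cmat \<Rightarrow> 'a cmat \<Rightarrow> 'a cmat" where
  "mmul I A B = (\<lambda>x y. \<Sum>z\<in>I. A x z * B z y)"

fun mpow :: "'a set \<Rightarrow> 'a cmat \<Rightarrow> nat \<Rightarrow> 'a cmat" where
  "mpow I A 0 = mid"
| "mpow I A (Suc k) = mmul I A (mpow I A k)"

definition mexp :: "'a set \<Rightarrow> 'a cmat \<Rightarrow> 'a cmat" where
  "mexp I A = (\<lambda>x y. \<Sum>k. mpow I A k x y / of_nat (fact k))"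

definition mapply :: "'a set \<Rightarrow> 'a cmat \<Rightarrow> 'a cvec \<Rightarrow> 'a cvec" where
  "mapply I A v = (\<lambda>x. \<Sum>y\<in>I. A x y * v y)"

definition vnorm :: "'a set \<Rightarrow> 'a cvec \<Rightarrow> real" where
  "vnorm I v = sqrt (\<Sum>x\<in>I. (cmod (v x))\<^sup>2)"

definition opnorm :: "'a set \<Rightarrow> 'a cmat \<Rightarrow> real" where
  "opnorm I A = Sup {vnorm I (mapply I A v) | v. vnorm I v \<le> 1}"

definition hermitian :: "'a set \<Rightarrow> 'a cmat \<Rightarrow> bool" where
  "hermitian I A \<longleftrightarrow> (\<forall>x\<in>I. \<forall>y\<in>I. A y x = cnj (A x y))"

definition mat_eq_on :: "'a set \<Rightarrow> 'a cmat \<Rightarrow> 'a cmat \<Rightarrow> bool" where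
  "mat_eq_on I A B \<longleftrightarrow> (\<forall>x\<in>I. \<forall>y\<in>I. A x y = B x y)"

text \<open>Sites 0..n-1, site i has local dimension d i; the basis of the tensor product
  is indexed by configurations.\<close>
definition configs :: "nat \<Rightarrow> (nat \<Rightarrow> nat) \<Rightarrow> (nat \<Rightarrow> nat) set" where
  "configs n d = {x. (\<forall>i<n. x i < d i) \<and> (\<forall>i\<ge>n. x i = 0)}"

text \<open>A acts (nontrivially at most) on the sites in S, i.e. A = B_S \<otimes> identity.\<close>
definition acts_on :: "nat \<Rightarrow> (nat \<Rightarrow> nat) \<Rightarrow> nat set \<Rightarrow> (nat \<Rightarrow> nat) cmat \<Rightarrow> bool" where
  "acts_on n d S A \<longleftrightarrow> (\<exists>B. \<forall>x\<in>configs n d. \<forall>y\<in>configs n d.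
     A x y = (if (\<forall>i<n. i \<notin> S \<longrightarrow> x i = y i)
              then B (\<lambda>i. if i \<in> S then x i else 0) (\<lambda>i. if i \<in> S then y i else 0)
              else 0))"

text \<open>Ancilla qubit: basis index False = |0>, True = |1>.\<close>
definition pauliX :: "bool cmat" where
  "pauliX = (\<lambda>a b. if a \<noteq> b then 1 else 0)"

definition proj1 :: "bool cmat" where
  "proj1 = (\<lambda>a b. if a \<and> b then 1 else 0)"

definition kron :: "'a cmat \<Rightarrow> bool cmat \<Rightarrow> ('a \<times> bool) cmat" where
  "kron A B = (\<lambda>(x, a) (y, b). A x y * B a b)"

definition tensor_ket0 :: "'a cvec \<Rightarrow> ('a \<times> bool) cvec" where
  "tensor_ket0 \<psi> = (\<lambda>(x, a). if a then 0 else \<psi> x)"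

end

theory Submission
  imports Defs "HOL-Analysis.Analysis"
begin
lemma mapply_mmul: "finite I \<Longrightarrow> mapply I (mmul I A B) v = mapply I A (mapply I B v)"
  unfolding mapply_def mmul_def
  by (auto simp: sum_distrib_left sum_distrib_right mult.assoc intro!: ext sum.swap)

lemma mapply_madd: "mapply I (madd A B) v = (\<lambda>x. mapply I A v x + mapply I B v x)"
  unfolding mapply_def madd_def by (auto simp: distrib_right sum.distrib)

lemma mapply_msmul: "mapply I (msmul c A) v = (\<lambda>x. c * mapply I A v x)"
  unfolding mapply_def msmul_def by (auto simp: sum_distrib_left mult.assoc)

lemma mapply_vadd: "mapply I A (\<lambda>x. v x + w x) = (\<lambda>x. mapply I A v x + mapply I A w x)"
  unfolding mapply_def by (auto simp: distrib_left sum.distrib)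

lemma mapply_vdiff: "mapply I A (\<lambda>x. v x - w x) = (\<lambda>x. mapply I A v x - mapply I A w x)"
  unfolding mapply_def by (auto simp: right_diff_distrib sum_subtractf)

lemma mapply_vsmul: "mapply I A (\<lambda>x. c * v x) = (\<lambda>x. c * mapply I A v x)"
  unfolding mapply_def by (auto simp: sum_distrib_left ac_simps)

lemma mapply_cong: "(\<And>y. y \<in> I \<Longrightarrow> v y = w y) \<Longrightarrow> mapply I A v = mapply I A w"
  unfolding mapply_def by auto

lemma mpow_msmul: "mpow I (msmul s A) k = msmul (s ^ k) (mpow I A k)"
proof (induction k)
  case 0 then show ?case by (auto simp: msmul_def)
next
  case (Suc k) then show ?case
    by (auto simp: msmul_def mmul_def sum_distrib_left ac_simps intro!: ext)
qed

definition msum :: "'a set \<Rightarrow> 'a cmat \<Rightarrow> real" where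
  "msum J A = (\<Sum>x\<in>J. \<Sum>y\<in>J. cmod (A x y))"

lemma msum_nonneg: "0 \<le> msum J A" unfolding msum_def by (auto intro!: sum_nonneg)

lemma mpow_bound:
  assumes "finite J" "x \<in> J"
  shows "cmod (mpow J A k x y) \<le> msum J A ^ k"
  using assms(2)
proof (induction k arbitrary: x)
  case 0 then show ?case by (auto simp: mid_def)
next
  case (Suc k)
  have "cmod (mpow J A (Suc k) x y) \<le> (\<Sum>z\<in>J. cmod (A x z) * cmod (mpow J A k z y))"
    by (simp add: mmul_def) (metis (no_types, lifting) norm_mult norm_sum sum.cong)
  also have "\<dots> \<le> (\<Sum>z\<in>J. cmod (A x z) * msum J A ^ k)"
    by (intro sum_mono mult_left_mono Suc.IH) auto
  also have "\<dots> = (\<Sum>z\<in>J. cmod (A x z)) * msum J A ^ k" by (simp add: sum_distrib_right)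
  also have "\<dots> \<le> msum J A * msum J A ^ k"
    unfolding msum_def
    by (intro mult_right_mono member_le_sum[of x J "\<lambda>x. \<Sum>y\<in>J. cmod (A x y)", OF Suc.prems])
       (auto intro!: sum_nonneg zero_le_power assms simp: msum_def)
  finally show ?case by simp
qed


lemma mexp_summable:
  assumes "finite J" "x \<in> J"
  shows "summable (\<lambda>n. (mpow J A n x y / of_nat (fact n)) * z ^ n)"
proof (rule summable_comparison_test')
  show "summable (\<lambda>n. (msum J A * cmod z) ^ n / fact n)"
    using summable_exp_generic[of "msum J A * cmod z"] by (simp add: divide_inverse ac_simps)
  fix n
  show "norm (mpow J A n x y / of_nat (fact n) * z ^ n) \<le> (msum J A * cmod z) ^ n / fact n"
    using mpow_bound[OF assms, of A n y]
    by (auto simp: norm_mult norm_divide norm_power power_mult_distrib divide_simps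
             intro!: mult_right_mono)
qed

lemma mexp_msmul: "mexp J (msmul z A) x y = (\<Sum>n. (mpow J A n x y / of_nat (fact n)) * z ^ n)"
  unfolding mexp_def mpow_msmul by (simp add: msmul_def ac_simps)

lemma mexp_deriv:
  assumes "finite J" "x \<in> J"
  shows "((\<lambda>z. mexp J (msmul z A) x y) has_field_derivative mmul J A (mexp J (msmul z A)) x y) (at z)"
proof -
  let ?c = "\<lambda>n. mpow J A n x y / of_nat (fact n)"
  have d: "((\<lambda>z. \<Sum>n. ?c n * z^n) has_field_derivative (\<Sum>n. diffs ?c n * z^n)) (at z)"
    by (rule termdiffs_strong_converges_everywhere) (rule mexp_summable[OF assms])
  have "(\<Sum>n. diffs ?c n * z^n) = (\<Sum>n. \<Sum>w\<in>J. A x w * ((mpow J A n w y / of_nat (fact n)) * z^n))"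
  proof (intro suminf_cong)
    fix n
    have "diffs ?c n * z^n = of_nat (Suc n) * ((\<Sum>w\<in>J. A x w * mpow J A n w y) / of_nat (fact (Suc n))) * z^n"
      by (simp only: diffs_def mpow.simps mmul_def)
    also have "of_nat (Suc n) * ((\<Sum>w\<in>J. A x w * mpow J A n w y) / of_nat (fact (Suc n))) = (\<Sum>w\<in>J. A x w * mpow J A n w y) / (of_nat (fact n) :: complex)"
      by (simp only: fact_Suc of_nat_mult) (simp add: field_simps del: of_nat_Suc)
    finally show "diffs ?c n * z^n = (\<Sum>w\<in>J. A x w * ((mpow J A n w y / of_nat (fact n)) * z^n))"
      by (simp add: sum_distrib_left sum_distrib_right sum_divide_distrib ac_simps)
  qed
  also have "\<dots> = (\<Sum>w\<in>J. \<Sum>n. A x w * ((mpow J A n w y / of_nat (fact n)) * z^n))"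
    by (rule suminf_sum) (rule summable_mult, rule mexp_summable, auto simp: assms)
  also have "\<dots> = mmul J A (mexp J (msmul z A)) x y"
    unfolding mmul_def mexp_msmul
  proof (intro sum.cong refl)
    fix w assume "w \<in> J"
    show "(\<Sum>n. A x w * ((mpow J A n w y / of_nat (fact n)) * z^n)) = A x w * (\<Sum>n. (mpow J A n w y / of_nat (fact n)) * z^n)"
      by (rule suminf_mult, rule mexp_summable) (use assms \<open>w \<in> J\<close> in auto)
  qed
  finally show ?thesis using d by (simp add: mexp_msmul)
qed

lemma vnorm_L2: "vnorm I v = L2_set (\<lambda>x. cmod (v x)) I"
  unfolding vnorm_def L2_set_def by simp

lemma vnorm_nonneg[simp]: "0 \<le> vnorm I v"
  by (simp add: vnorm_L2)

lemma vnorm_sq: "(vnorm I v)\<^sup>2 = (\<Sum>x\<in>I. (cmod (v x))\<^sup>2)"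
  unfolding vnorm_def by (simp add: sum_nonneg)

lemma vnorm_cong: "(\<And>x. x \<in> I \<Longrightarrow> v x = w x) \<Longrightarrow> vnorm I v = vnorm I w"
  unfolding vnorm_def by simp

lemma vnorm_add: "vnorm I (\<lambda>x. v x + w x) \<le> vnorm I v + vnorm I w"
proof -
  have "vnorm I (\<lambda>x. v x + w x) \<le> L2_set (\<lambda>x. cmod (v x) + cmod (w x)) I"
    unfolding vnorm_L2 by (rule L2_set_mono) (auto intro: norm_triangle_ineq)
  also have "\<dots> \<le> vnorm I v + vnorm I w"
    unfolding vnorm_L2 by (rule L2_set_triangle_ineq)
  finally show ?thesis .
qed

lemma vnorm_smul: "vnorm I (\<lambda>x. c * v x) = cmod c * vnorm I v"
  unfolding vnorm_L2 by (simp add: norm_mult L2_set_right_distrib)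

lemma vnorm_minus: "vnorm I (\<lambda>x. - v x) = vnorm I v"
  unfolding vnorm_L2 by simp

lemma vnorm_diff: "vnorm I (\<lambda>x. v x - w x) \<le> vnorm I v + vnorm I w"
  using vnorm_add[of I v "\<lambda>x. - w x"] vnorm_minus[of I w] by simp

lemma vnorm_zero: "vnorm I (\<lambda>x. 0) = 0"
  unfolding vnorm_def by simp

lemma vnorm_comp_le: "x \<in> I \<Longrightarrow> finite I \<Longrightarrow> cmod (v x) \<le> vnorm I v"
  unfolding vnorm_L2 L2_set_def
  by (rule real_le_rsqrt) (auto intro: member_le_sum)

definition ip :: "'a set \<Rightarrow> 'a cvec \<Rightarrow> 'a cvec \<Rightarrow> complex" where
  "ip I v w = (\<Sum>x\<in>I. cnj (v x) * w x)"

lemma ip_CS: "cmod (ip I v w) \<le> vnorm I v * vnorm I w"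
proof -
  have "cmod (ip I v w) \<le> (\<Sum>x\<in>I. \<bar>cmod (v x)\<bar> * \<bar>cmod (w x)\<bar>)"
    unfolding ip_def by (rule order_trans[OF norm_sum]) (simp add: norm_mult)
  also have "\<dots> \<le> vnorm I v * vnorm I w" unfolding vnorm_L2 by (rule L2_set_mult_ineq)
  finally show ?thesis .
qed

lemma Re_ip_le: "Re (ip I v w) \<le> vnorm I v * vnorm I w"
  using ip_CS[of I v w] complex_Re_le_cmod[of "ip I v w"] by linarith

lemma ip_add: "ip I v (\<lambda>x. w1 x + w2 x) = ip I v w1 + ip I v w2"
  unfolding ip_def by (simp add: distrib_left sum.distrib)

lemma herm_ip:
  assumes "hermitian I A" "finite I"
  shows "ip I v (mapply I A w) = cnj (ip I w (mapply I A v))"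
proof -
  have "ip I v (mapply I A w) = (\<Sum>x\<in>I. \<Sum>y\<in>I. cnj (v x) * A x y * w y)"
    unfolding ip_def mapply_def by (simp add: sum_distrib_left mult.assoc)
  also have "\<dots> = (\<Sum>y\<in>I. \<Sum>x\<in>I. cnj (v x) * A x y * w y)" by (rule sum.swap)
  also have "\<dots> = (\<Sum>y\<in>I. \<Sum>x\<in>I. cnj (cnj (w y) * A y x * v x))"
  proof (intro sum.cong refl)
    fix x y assume "x \<in> I" "y \<in> I"
    then have "A y x = cnj (A x y)" using assms(1) unfolding hermitian_def by blast
    then show "cnj (v x) * A x y * w y = cnj (cnj (w y) * A y x * v x)" by simp
  qed
  also have "\<dots> = cnj (ip I w (mapply I A v))"
    unfolding ip_def mapply_def by (simp add: sum_distrib_left mult.assoc)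
  finally show ?thesis .
qed

lemma herm_Re0:
  assumes "hermitian I A" "finite I"
  shows "Re (ip I v (\<lambda>x. - \<i> * mapply I A v x)) = 0"
proof -
  have "ip I v (\<lambda>x. - \<i> * mapply I A v x) = - \<i> * ip I v (mapply I A v)"
    unfolding ip_def by (simp add: sum_distrib_left ac_simps)
  moreover have "ip I v (mapply I A v) = cnj (ip I v (mapply I A v))" by (rule herm_ip[OF assms])
  moreover have "Im (ip I v (mapply I A v)) = 0"
    using arg_cong[OF calculation(2), of Im] by simp
  ultimately show ?thesis by simp
qed

lemma herm_Re0_pair:
  assumes "hermitian I A" "finite I"
  shows "Re (ip I v (\<lambda>x. - \<i> * mapply I A w x)) + Re (ip I w (\<lambda>x. - \<i> * mapply I A v x)) = 0"
proof -
  have e: "\<And>v w. ip I v (\<lambda>x. - \<i> * mapply I A w x) = - \<i> * ip I v (mapply I A w)"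
    unfolding ip_def by (simp add: sum_distrib_left ac_simps)
  have "ip I v (mapply I A w) = cnj (ip I w (mapply I A v))" by (rule herm_ip[OF assms])
  then show ?thesis unfolding e by simp
qed

lemma mapply_bound_msum:
  assumes "finite I"
  shows "vnorm I (mapply I A v) \<le> msum I A * vnorm I v"
proof -
  have "vnorm I (mapply I A v) \<le> (\<Sum>x\<in>I. cmod (mapply I A v x))"
    unfolding vnorm_L2 by (rule L2_set_le_sum) auto
  also have "\<dots> \<le> (\<Sum>x\<in>I. \<Sum>y\<in>I. cmod (A x y) * vnorm I v)"
  proof (rule sum_mono)
    fix x assume "x \<in> I"
    have "cmod (mapply I A v x) \<le> (\<Sum>y\<in>I. cmod (A x y) * cmod (v y))"
      unfolding mapply_def by (rule order_trans[OF norm_sum]) (simp add: norm_mult)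
    also have "\<dots> \<le> (\<Sum>y\<in>I. cmod (A x y) * vnorm I v)"
      by (intro sum_mono mult_left_mono vnorm_comp_le assms) auto
    finally show "cmod (mapply I A v x) \<le> (\<Sum>y\<in>I. cmod (A x y) * vnorm I v)" .
  qed
  also have "\<dots> = msum I A * vnorm I v"
    unfolding msum_def by (simp add: sum_distrib_right)
  finally show ?thesis .
qed

lemma opnorm_bound:
  assumes "finite I"
  shows "vnorm I (mapply I A v) \<le> opnorm I A * vnorm I v"
proof -
  let ?S = "{vnorm I (mapply I A v) | v. vnorm I v \<le> 1}"
  have bdd: "bdd_above ?S"
  proof
    fix r assume "r \<in> ?S"
    then obtain w where "r = vnorm I (mapply I A w)" "vnorm I w \<le> 1" by auto
    then show "r \<le> msum I A"
      using mapply_bound_msum[OF assms, of A w] msum_nonneg[of I A]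
      by (smt (verit) mult_left_le)
  qed
  show ?thesis
  proof (cases "vnorm I v = 0")
    case True
    then have "\<forall>x\<in>I. v x = 0" unfolding vnorm_L2 using L2_set_eq_0_iff[OF assms] by auto
    then have "mapply I A v = mapply I A (\<lambda>x. 0)" by (intro mapply_cong) auto
    then have "mapply I A v = (\<lambda>x. 0)" by (simp add: mapply_def)
    then show ?thesis using True by (simp add: vnorm_zero)
  next
    case False
    then have pos: "vnorm I v > 0" using vnorm_nonneg[of I v] by linarith
    let ?w = "\<lambda>x. complex_of_real (1 / vnorm I v) * v x"
    have "vnorm I ?w = 1" unfolding vnorm_smul norm_of_real using pos by simp
    then have "vnorm I (mapply I A ?w) \<in> ?S" by force
    then have "vnorm I (mapply I A ?w) \<le> opnorm I A"
      unfolding opnorm_def by (rule cSup_upper[OF _ bdd])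
    moreover have "vnorm I (mapply I A ?w) = vnorm I (mapply I A v) / vnorm I v"
      unfolding mapply_vsmul vnorm_smul using pos by (simp add: norm_divide)
    ultimately have "vnorm I v * (vnorm I (mapply I A v) / vnorm I v) \<le> vnorm I v * opnorm I A"
      using pos by (intro mult_left_mono) auto
    then show ?thesis using pos by (simp add: mult.commute)
  qed
qed

lemma nsq_deriv:
  assumes "finite I" "\<And>x. x \<in> I \<Longrightarrow> ((\<lambda>t. f t x) has_vector_derivative f' x) (at t)"
  shows "((\<lambda>t. (vnorm I (f t))\<^sup>2) has_real_derivative 2 * Re (ip I (f t) f')) (at t)"
proof -
  have eq: "(\<lambda>t. (vnorm I (f t))\<^sup>2) = (\<lambda>t. \<Sum>x\<in>I. Re (cnj (f t x) * f t x))"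
    unfolding vnorm_sq by (intro ext sum.cong refl, subst cmod_power2) (simp add: power2_eq_square)
  have "((\<lambda>t. \<Sum>x\<in>I. cnj (f t x) * f t x) has_vector_derivative
         (\<Sum>x\<in>I. cnj (f t x) * f' x + cnj (f' x) * f t x)) (at t)"
    by (intro has_vector_derivative_sum has_vector_derivative_mult has_vector_derivative_cnj assms)
  then have "((\<lambda>t. Re (\<Sum>x\<in>I. cnj (f t x) * f t x)) has_vector_derivative
         Re (\<Sum>x\<in>I. cnj (f t x) * f' x + cnj (f' x) * f t x)) (at t)"
    by (rule bounded_linear.has_vector_derivative[OF bounded_linear_Re])
  moreover have "Re (\<Sum>x\<in>I. cnj (f t x) * f' x + cnj (f' x) * f t x) = 2 * Re (ip I (f t) f')"
    unfolding ip_def by (simp add: Re_sum sum.distrib algebra_simps)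
  ultimately show ?thesis unfolding eq has_real_derivative_iff_has_vector_derivative
    by (simp add: Re_sum)
qed

lemma mexp_vec_deriv:
  assumes "finite J" "x \<in> J"
  shows "((\<lambda>t. mapply J (mexp J (msmul (complex_of_real t) A)) v x) has_vector_derivative
            mapply J A (mapply J (mexp J (msmul (complex_of_real t) A)) v) x) (at t)"
proof -
  have "((\<lambda>t. mapply J (mexp J (msmul (complex_of_real t) A)) v x) has_vector_derivative
          (\<Sum>y\<in>J. mmul J A (mexp J (msmul (complex_of_real t) A)) x y * v y)) (at t)"
    unfolding mapply_def
    by (intro has_vector_derivative_sum has_vector_derivative_mult_left
          has_vector_derivative_real_field mexp_deriv assms)
  moreover have "(\<Sum>y\<in>J. mmul J A (mexp J (msmul (complex_of_real t) A)) x y * v y)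
      = mapply J A (mapply J (mexp J (msmul (complex_of_real t) A)) v) x"
    using fun_cong[OF mapply_mmul[OF assms(1), of A "mexp J (msmul (complex_of_real t) A)" v], of x]
    by (simp add: mapply_def)
  ultimately show ?thesis by simp
qed

lemma mexp_zero:
  assumes "x \<in> J" "finite J"
  shows "mapply J (mexp J (msmul 0 A)) v x = v x"
proof -
  have "mexp J (msmul 0 A) x y = mid x y" for y
    unfolding mexp_msmul powser_zero by simp
  then have "mapply J (mexp J (msmul 0 A)) v x = (\<Sum>y\<in>J. if x = y then v y else 0)"
    unfolding mapply_def mid_def by (intro sum.cong) auto
  then show ?thesis using assms by simp
qed

lemma le_sqrt_eps:
  fixes x y :: real
  assumes "\<And>e. e > 0 \<Longrightarrow> x \<le> sqrt e + y"
  shows "x \<le> y"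
proof (rule ccontr)
  assume "\<not> x \<le> y"
  then have d: "x - y > 0" by simp
  have "x \<le> sqrt (((x - y) / 2)\<^sup>2) + y" using assms[of "((x - y) / 2)\<^sup>2"] d by simp
  also have "sqrt (((x - y) / 2)\<^sup>2) = (x - y) / 2" using d by simp
  finally have h: "x \<le> (x - y) / 2 + y" .
  have "2 * x \<le> x + y" using h by (simp add: field_simps)
  then show False using d by simp
qed

lemma gronwall_sqrt:
  fixes q q' :: "real \<Rightarrow> real"
  assumes T: "0 \<le> T" and K: "0 \<le> K"
    and d: "\<And>t. 0 \<le> t \<Longrightarrow> t \<le> T \<Longrightarrow> (q has_real_derivative q' t) (at t)"
    and q0: "q 0 = 0" and qnn: "\<And>t. 0 \<le> t \<Longrightarrow> t \<le> T \<Longrightarrow> 0 \<le> q t"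
    and b: "\<And>t. 0 \<le> t \<Longrightarrow> t \<le> T \<Longrightarrow> q' t \<le> 2 * sqrt (q t) * K"
  shows "sqrt (q T) \<le> T * K"
proof (rule le_sqrt_eps)
  fix e :: real assume e: "e > 0"
  define g where "g t = sqrt (q t + e) - t * K" for t
  have "g T \<le> g 0"
  proof (rule DERIV_nonpos_imp_nonincreasing[OF T])
    fix t assume t: "0 \<le> t" "t \<le> T"
    have pos: "q t + e > 0" using qnn[OF t] e by simp
    have h1: "((\<lambda>t. sqrt (q t + e)) has_real_derivative (inverse (sqrt (q t + e)) / 2 * q' t)) (at t)"
      by (rule DERIV_chain2[of sqrt "inverse (sqrt (q t + e)) / 2" "\<lambda>t. q t + e" t, OF DERIV_real_sqrt[OF pos]]) (use DERIV_add[OF d[OF t] DERIV_const[of e]] in simp)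
    have h2: "((\<lambda>t. t * K) has_real_derivative K) (at t)"
      using DERIV_cmult_right[OF DERIV_ident, of K t] by simp
    have "(g has_real_derivative (inverse (sqrt (q t + e)) / 2 * q' t - K)) (at t)"
      unfolding g_def by (rule DERIV_diff[OF h1 h2])
    moreover have "inverse (sqrt (q t + e)) / 2 * q' t - K \<le> 0"
    proof -
      have "inverse (sqrt (q t + e)) / 2 * q' t \<le> inverse (sqrt (q t + e)) / 2 * (2 * sqrt (q t) * K)"
        using b[OF t] pos by (intro mult_left_mono) auto
      also have "\<dots> = (sqrt (q t) / sqrt (q t + e)) * K" using pos by (simp add: field_simps)
      also have "\<dots> \<le> 1 * K"
      proof (rule mult_right_mono[OF _ K])
        have "sqrt (q t) \<le> sqrt (q t + e)" using e by simp
        then show "sqrt (q t) / sqrt (q t + e) \<le> 1" using pos by (simp add: divide_le_eq)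
      qed
      finally show ?thesis by simp
    qed
    ultimately show "\<exists>y. (g has_real_derivative y) (at t) \<and> y \<le> 0" by blast
  qed
  then have "sqrt (q T + e) \<le> sqrt e + T * K" unfolding g_def q0 by simp
  moreover have "sqrt (q T) \<le> sqrt (q T + e)" using e by simp
  ultimately show "sqrt (q T) \<le> sqrt e + T * K" by linarith
qed

lemma ip_cong: "(\<And>x. x \<in> I \<Longrightarrow> w x = w' x) \<Longrightarrow> ip I v w = ip I v w'"
  unfolding ip_def by simp

lemma ip_cong1: "(\<And>x. x \<in> I \<Longrightarrow> v x = v' x) \<Longrightarrow> ip I v w = ip I v' w"
  unfolding ip_def by simp

lemma ip_sym: "ip I v w = cnj (ip I w v)"
  unfolding ip_def by (simp add: mult.commute)

lemma ip_smul: "ip I v (\<lambda>x. a * w x) = a * ip I v w"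
  unfolding ip_def by (simp add: sum_distrib_left ac_simps)

lemma ip_diff: "ip I v (\<lambda>x. w1 x - w2 x) = ip I v w1 - ip I v w2"
  unfolding ip_def by (simp add: right_diff_distrib sum_subtractf)

lemma ip_add1: "ip I (\<lambda>x. v1 x + v2 x) w = ip I v1 w + ip I v2 w"
  unfolding ip_def by (simp add: distrib_right sum.distrib)

lemma herm_ip2:
  assumes "hermitian I A" "finite I"
  shows "ip I v (mapply I A w) = ip I (mapply I A v) w"
  using herm_ip[OF assms, of v w] ip_sym[of I "mapply I A v" w] by simp

locale pset =
  fixes I :: "'a set" and HI HX H1 Hel L F :: "'a cmat" and dt c lc :: real
  assumes finI: "finite I"
    and hI: "hermitian I HI" and hX: "hermitian I HX" and h1: "hermitian I H1" and hE: "hermitian I Hel"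
    and dt0: "0 < dt" and dt1: "dt < 1" and c0: "0 \<le> c" and lc0: "0 \<le> lc"
    and bI: "\<And>v. vnorm I (mapply I HI v) \<le> c * vnorm I v"
    and bX: "\<And>v. vnorm I (mapply I HX v) \<le> c / sqrt dt * vnorm I v"
    and b1: "\<And>v. vnorm I (mapply I H1 v) \<le> c / dt * vnorm I v"
    and bL: "\<And>v. vnorm I (mapply I L v) \<le> lc * vnorm I v"
    and sq1: "mat_eq_on I (mmul I H1 H1) (msmul (complex_of_real ((2 * pi / dt)\<^sup>2)) mid)"
    and splitE: "\<And>v x. x \<in> I \<Longrightarrow> mapply I Hel v x = mapply I L v x + mapply I F v x"
    and cmI: "\<And>v x. x \<in> I \<Longrightarrow> mapply I F (mapply I HI v) x = mapply I HI (mapply I F v) x"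
    and cmX: "\<And>v x. x \<in> I \<Longrightarrow> mapply I F (mapply I HX v) x = mapply I HX (mapply I F v) x"
    and cm1: "\<And>v x. x \<in> I \<Longrightarrow> mapply I F (mapply I H1 v) x = mapply I H1 (mapply I F v) x"
begin

definition op :: "'a cmat \<Rightarrow> 'a cvec \<Rightarrow> 'a cvec" where
  "op M v = (\<lambda>x. if x \<in> I then mapply I M v x else 0)"

lemma op_add: "op M (\<lambda>x. v x + w x) = (\<lambda>x. op M v x + op M w x)"
  unfolding op_def mapply_vadd by auto

lemma op_diff: "op M (\<lambda>x. v x - w x) = (\<lambda>x. op M v x - op M w x)"
  unfolding op_def mapply_vdiff by auto

lemma op_smul: "op M (\<lambda>x. a * v x) = (\<lambda>x. a * op M v x)"
  unfolding op_def mapply_vsmul by auto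

lemma op_cong: "(\<And>x. x \<in> I \<Longrightarrow> v x = w x) \<Longrightarrow> op M v = op M w"
  unfolding op_def using mapply_cong[of I v w M] by auto

lemma op_in: "x \<in> I \<Longrightarrow> op M v x = mapply I M v x"
  unfolding op_def by simp

lemma op_out: "x \<notin> I \<Longrightarrow> op M v x = 0"
  unfolding op_def by simp

lemma op_op: "op M (op N v) = op M (mapply I N v)"
  by (rule op_cong) (simp add: op_in)

lemma vnorm_op: "vnorm I (op M v) = vnorm I (mapply I M v)"
  by (rule vnorm_cong) (simp add: op_in)

lemma ip_op: "ip I v (\<lambda>x. a * op M w x) = ip I v (\<lambda>x. a * mapply I M w x)"
  by (rule ip_cong) (simp add: op_in)

lemma op_E: "op Hel v = (\<lambda>x. op L v x + op F v x)"
  unfolding op_def using splitE by auto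

lemma op_commI: "op F (op HI v) = op HI (op F v)"
  unfolding op_op by (auto simp: op_def cmI intro!: ext mapply_cong)

lemma op_commX: "op F (op HX v) = op HX (op F v)"
  unfolding op_op by (auto simp: op_def cmX intro!: ext mapply_cong)

lemma op_comm1: "op F (op H1 v) = op H1 (op F v)"
  unfolding op_op by (auto simp: op_def cm1 intro!: ext mapply_cong)

definition w2 :: complex where "w2 = complex_of_real ((2 * pi / dt)\<^sup>2)"

lemma op_H1H1: "op H1 (op H1 (op M v)) = (\<lambda>x. w2 * op M v x)"
proof (rule ext)
  fix x
  show "op H1 (op H1 (op M v)) x = w2 * op M v x"
  proof (cases "x \<in> I")
    case True
    have "op H1 (op H1 (op M v)) x = mapply I H1 (op H1 (op M v)) x" using True by (rule op_in)
    also have "\<dots> = mapply I H1 (mapply I H1 (op M v)) x"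
      by (subst mapply_cong[of I "op H1 (op M v)" "mapply I H1 (op M v)"]) (auto simp: op_in)
    also have "\<dots> = mapply I (mmul I H1 H1) (op M v) x" by (simp add: mapply_mmul finI)
    also have "\<dots> = (\<Sum>y\<in>I. (if x = y then w2 else 0) * op M v y)"
      unfolding mapply_def using sq1 True
      by (intro sum.cong refl) (auto simp: mat_eq_on_def msmul_def mid_def w2_def)
    also have "\<dots> = (\<Sum>y\<in>I. if x = y then w2 * op M v y else 0)"
      by (intro sum.cong) auto
    also have "\<dots> = w2 * op M v x" using True finI by simp
    finally show ?thesis .
  qed (simp add: op_out)
qed

lemma bIo: "vnorm I (op HI v) \<le> c * vnorm I v" unfolding vnorm_op by (rule bI)
lemma bXo: "vnorm I (op HX v) \<le> c / sqrt dt * vnorm I v" unfolding vnorm_op by (rule bX)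
lemma b1o: "vnorm I (op H1 v) \<le> c / dt * vnorm I v" unfolding vnorm_op by (rule b1)
lemma bLo: "vnorm I (op L v) \<le> lc * vnorm I v" unfolding vnorm_op by (rule bL)

lemma herm_op_Re0:
  assumes "hermitian I A"
  shows "Re (ip I v (\<lambda>x. - \<i> * op A v x)) = 0"
  unfolding ip_op by (rule herm_Re0[OF assms finI])

lemma herm_op_pair:
  assumes "hermitian I A"
  shows "Re (ip I v (\<lambda>x. - \<i> * op A w x)) + Re (ip I w (\<lambda>x. - \<i> * op A v x)) = 0"
  unfolding ip_op by (rule herm_Re0_pair[OF assms finI])

lemma herm_op_swap:
  assumes "hermitian I A"
  shows "ip I v (op A w) = ip I (op A v) w"
proof -
  have "ip I v (op A w) = ip I v (mapply I A w)" by (rule ip_cong) (simp add: op_in)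
  also have "\<dots> = ip I (mapply I A v) w" by (rule herm_ip2[OF assms finI])
  also have "\<dots> = ip I (op A v) w" by (rule ip_cong1) (simp add: op_in)
  finally show ?thesis .
qed

lemma herm_op_real:
  assumes "hermitian I A"
  shows "Im (ip I v (op A v)) = 0"
proof -
  have e1: "ip I v (op A v) = ip I v (mapply I A v)" by (rule ip_cong) (simp add: op_in)
  have e2: "ip I v (mapply I A v) = cnj (ip I v (mapply I A v))" by (rule herm_ip[OF assms finI])
  have "Im (ip I v (mapply I A v)) = Im (cnj (ip I v (mapply I A v)))" using e2 by (rule arg_cong)
  then have "Im (ip I v (mapply I A v)) = 0" by simp
  with e1 show ?thesis by simp
qed

end

lemma sum_bool_prod: "(\<Sum>p\<in>I \<times> (UNIV::bool set). g p) = (\<Sum>y\<in>I. g (y, False) + g (y, True))"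
proof -
  have "(\<Sum>p\<in>I \<times> (UNIV::bool set). g p) = (\<Sum>y\<in>I. \<Sum>b\<in>(UNIV::bool set). g (y, b))"
    using sum.cartesian_product[of "\<lambda>x y. g (x, y)" "UNIV::bool set" I] by (simp add: split_def)
  also have "\<dots> = (\<Sum>y\<in>I. g (y, False) + g (y, True))"
    by (simp add: UNIV_bool add.commute)
  finally show ?thesis .
qed

locale pset2 = pset +
  fixes psi :: "'a cvec"
begin

definition om :: real where "om = 2 * pi / dt"
definition Pv :: "'a cvec \<Rightarrow> 'a cvec" where
  "Pv v = (\<lambda>x. complex_of_real (1 / om\<^sup>2) * op HX (op H1 (op HX v)) x)"
definition Qv :: "'a cvec \<Rightarrow> 'a cvec" where
  "Qv v = (\<lambda>x. complex_of_real (1 / om) * op HX (op HX v) x)"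
definition al :: "real \<Rightarrow> complex" where "al t = - \<i> * complex_of_real (sin (om * t) / om)"
definition be :: "real \<Rightarrow> complex" where "be t = complex_of_real ((cos (om * t) - 1) / om)"
definition ga :: "real \<Rightarrow> complex" where "ga t = complex_of_real ((cos (om * t) - 1) / om\<^sup>2)"

definition HH :: "'a cmat" where
  "HH = madd HI (msmul (- complex_of_real (1 / om\<^sup>2)) (mmul I (mmul I HX H1) HX))"
definition KK :: "'a cmat" where "KK = madd HH Hel"
definition Gp :: "('a \<times> bool) cmat" where
  "Gp = madd (madd (kron HI mid) (madd (kron HX pauliX) (kron H1 proj1))) (kron Hel mid)"
definition JJ :: "('a \<times> bool) set" where "JJ = I \<times> UNIV"

definition phi :: "real \<Rightarrow> 'a cvec" where
  "phi t = mapply I (mexp I (msmul (- \<i> * complex_of_real t) KK)) psi"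
definition uu :: "real \<Rightarrow> ('a \<times> bool) cvec" where
  "uu t = mapply JJ (mexp JJ (msmul (- \<i> * complex_of_real t) Gp)) (tensor_ket0 psi)"
definition u0 :: "real \<Rightarrow> 'a cvec" where "u0 t = (\<lambda>x. uu t (x, False))"
definition u1 :: "real \<Rightarrow> 'a cvec" where "u1 t = (\<lambda>x. uu t (x, True))"
definition t0 :: "real \<Rightarrow> 'a cvec" where
  "t0 t = (\<lambda>x. phi t x + al t * Pv (phi t) x + be t * Qv (phi t) x)"
definition t1 :: "real \<Rightarrow> 'a cvec" where
  "t1 t = (\<lambda>x. ga t * op H1 (op HX (phi t)) x + al t * op HX (phi t) x)"
definition e0 :: "real \<Rightarrow> 'a cvec" where "e0 t = (\<lambda>x. u0 t x - t0 t x)"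
definition e1 :: "real \<Rightarrow> 'a cvec" where "e1 t = (\<lambda>x. u1 t x - t1 t x)"

definition dphi :: "real \<Rightarrow> 'a cvec" where
  "dphi t = (\<lambda>x. - \<i> * (op HI (phi t) x - Pv (phi t) x + op Hel (phi t) x))"

lemma finJ: "finite JJ" unfolding JJ_def using finI by simp

lemma om_pos: "om > 0" unfolding om_def using dt0 by simp

lemma op2_in: "x \<in> I \<Longrightarrow> op A (op B v) x = mapply I A (mapply I B v) x"
  by (simp add: op_in op_op)

lemma op3_in: "x \<in> I \<Longrightarrow> op A (op B (op C v)) x = mapply I A (mapply I B (mapply I C v)) x"
proof -
  assume x: "x \<in> I"
  have e1: "mapply I B (op C v) = mapply I B (mapply I C v)" by (rule mapply_cong) (simp add: op_in)
  have e2: "mapply I A (op B w) = mapply I A (mapply I B w)" for w by (rule mapply_cong) (simp add: op_in)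
  show ?thesis using x by (simp add: op_in e1 e2)
qed

lemma mapply_KK: "x \<in> I \<Longrightarrow> mapply I KK v x = op HI v x - Pv v x + op Hel v x"
  unfolding KK_def HH_def Pv_def
  using op_in[of x HI v] op_in[of x Hel v] op3_in[of x HX H1 HX v]
  by (simp add: mapply_madd mapply_msmul mapply_mmul finI)

lemma msmul_split: "msmul (- \<i> * complex_of_real t) A = msmul (complex_of_real t) (msmul (- \<i>) A)"
  unfolding msmul_def by (auto intro!: ext)

lemma phi_deriv: "x \<in> I \<Longrightarrow> ((\<lambda>t. phi t x) has_vector_derivative dphi t x) (at t)"
proof -
  assume x: "x \<in> I"
  have "((\<lambda>t. phi t x) has_vector_derivative mapply I (msmul (- \<i>) KK) (phi t) x) (at t)"
    unfolding phi_def msmul_split by (rule mexp_vec_deriv[OF finI x])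
  moreover have "mapply I (msmul (- \<i>) KK) (phi t) x = dphi t x"
    unfolding dphi_def mapply_msmul using mapply_KK[OF x] by simp
  ultimately show ?thesis by simp
qed

lemma op_deriv:
  assumes "\<And>y. y \<in> I \<Longrightarrow> ((\<lambda>t. f t y) has_vector_derivative f' y) (at t)"
  shows "((\<lambda>t. op M (f t) x) has_vector_derivative op M f' x) (at t)"
proof (cases "x \<in> I")
  case True
  have "((\<lambda>t. mapply I M (f t) x) has_vector_derivative mapply I M f' x) (at t)"
    unfolding mapply_def
    by (intro has_vector_derivative_sum has_vector_derivative_mult_right assms)
  then show ?thesis using True by (simp add: op_in)
next
  case False then show ?thesis by (simp add: op_out)
qed

lemma Gp_block0: "mapply JJ Gp w (x, False) =
   mapply I HI (\<lambda>y. w (y, False)) x + mapply I HX (\<lambda>y. w (y, True)) x + mapply I Hel (\<lambda>y. w (y, False)) x"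
  unfolding mapply_def JJ_def sum_bool_prod Gp_def madd_def kron_def mid_def pauliX_def proj1_def
  by (simp add: sum.distrib algebra_simps)

lemma Gp_block1: "mapply JJ Gp w (x, True) =
   mapply I HI (\<lambda>y. w (y, True)) x + mapply I HX (\<lambda>y. w (y, False)) x + mapply I H1 (\<lambda>y. w (y, True)) x
   + mapply I Hel (\<lambda>y. w (y, True)) x"
  unfolding mapply_def JJ_def sum_bool_prod Gp_def madd_def kron_def mid_def pauliX_def proj1_def
  by (simp add: sum.distrib algebra_simps)

lemma uu_deriv: "p \<in> JJ \<Longrightarrow> ((\<lambda>t. uu t p) has_vector_derivative - \<i> * mapply JJ Gp (uu t) p) (at t)"
proof -
  assume p: "p \<in> JJ"
  have "((\<lambda>t. uu t p) has_vector_derivative mapply JJ (msmul (- \<i>) Gp) (uu t) p) (at t)"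
    unfolding uu_def msmul_split by (rule mexp_vec_deriv[OF finJ p])
  then show ?thesis by (simp add: mapply_msmul)
qed

definition du0 :: "real \<Rightarrow> 'a cvec" where
  "du0 t = (\<lambda>x. - \<i> * (op HI (u0 t) x + op HX (u1 t) x + op Hel (u0 t) x))"
definition du1 :: "real \<Rightarrow> 'a cvec" where
  "du1 t = (\<lambda>x. - \<i> * (op HI (u1 t) x + op HX (u0 t) x + op H1 (u1 t) x + op Hel (u1 t) x))"

lemma u0_deriv: "x \<in> I \<Longrightarrow> ((\<lambda>t. u0 t x) has_vector_derivative du0 t x) (at t)"
proof -
  assume x: "x \<in> I"
  then have "(x, False) \<in> JJ" unfolding JJ_def by simp
  from uu_deriv[OF this] show ?thesis
    unfolding u0_def du0_def Gp_block0 using x by (simp add: op_in u0_def u1_def)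
qed

lemma u1_deriv: "x \<in> I \<Longrightarrow> ((\<lambda>t. u1 t x) has_vector_derivative du1 t x) (at t)"
proof -
  assume x: "x \<in> I"
  then have "(x, True) \<in> JJ" unfolding JJ_def by simp
  from uu_deriv[OF this] show ?thesis
    unfolding u1_def du1_def Gp_block1 using x by (simp add: op_in u0_def u1_def)
qed

lemma of_real_deriv: "(f has_real_derivative f') (at t) \<Longrightarrow>
   ((\<lambda>t. complex_of_real (f t)) has_vector_derivative complex_of_real f') (at t)"
  by (rule has_vector_derivative_of_real)

lemma al_deriv: "(al has_vector_derivative (- \<i> * complex_of_real (cos (om * t)))) (at t)"
proof -
  have "((\<lambda>t. sin (om * t) / om) has_real_derivative cos (om * t)) (at t)"
    using om_pos by (auto intro!: derivative_eq_intros)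
  from has_vector_derivative_mult_right[OF of_real_deriv[OF this], of "- \<i>"]
  show ?thesis unfolding al_def[abs_def] by simp
qed

lemma be_deriv: "(be has_vector_derivative (- complex_of_real (sin (om * t)))) (at t)"
proof -
  have "((\<lambda>t. (cos (om * t) - 1) / om) has_real_derivative - sin (om * t)) (at t)"
    using om_pos by (auto intro!: derivative_eq_intros)
  from of_real_deriv[OF this] show ?thesis unfolding be_def[abs_def] by simp
qed

lemma ga_deriv: "(ga has_vector_derivative (- complex_of_real (sin (om * t) / om))) (at t)"
proof -
  have "((\<lambda>t. (cos (om * t) - 1) / om\<^sup>2) has_real_derivative - (sin (om * t) / om)) (at t)"
    using om_pos by (auto intro!: derivative_eq_intros simp: power2_eq_square)
  from of_real_deriv[OF this] show ?thesis unfolding ga_def[abs_def] by simp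
qed

end

context pset2 begin

definition ald :: "real \<Rightarrow> complex" where "ald t = - \<i> * complex_of_real (cos (om * t))"
definition bed :: "real \<Rightarrow> complex" where "bed t = - complex_of_real (sin (om * t))"
definition gad :: "real \<Rightarrow> complex" where "gad t = - complex_of_real (sin (om * t) / om)"

definition dt0v :: "real \<Rightarrow> 'a cvec" where
  "dt0v t = (\<lambda>x. dphi t x + (al t * Pv (dphi t) x + ald t * Pv (phi t) x)
                + (be t * Qv (dphi t) x + bed t * Qv (phi t) x))"
definition dt1v :: "real \<Rightarrow> 'a cvec" where
  "dt1v t = (\<lambda>x. (ga t * op H1 (op HX (dphi t)) x + gad t * op H1 (op HX (phi t)) x)
                + (al t * op HX (dphi t) x + ald t * op HX (phi t) x))"

lemma Pv_deriv:
  assumes "\<And>y. y \<in> I \<Longrightarrow> ((\<lambda>t. f t y) has_vector_derivative f' y) (at t)"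
  shows "((\<lambda>t. Pv (f t) x) has_vector_derivative Pv f' x) (at t)"
  unfolding Pv_def by (intro has_vector_derivative_mult_right op_deriv assms)

lemma Qv_deriv:
  assumes "\<And>y. y \<in> I \<Longrightarrow> ((\<lambda>t. f t y) has_vector_derivative f' y) (at t)"
  shows "((\<lambda>t. Qv (f t) x) has_vector_derivative Qv f' x) (at t)"
  unfolding Qv_def by (intro has_vector_derivative_mult_right op_deriv assms)

lemma t0_deriv: "x \<in> I \<Longrightarrow> ((\<lambda>t. t0 t x) has_vector_derivative dt0v t x) (at t)"
  unfolding t0_def dt0v_def ald_def bed_def
  by (intro has_vector_derivative_add has_vector_derivative_mult phi_deriv al_deriv be_deriv
        Pv_deriv Qv_deriv)

lemma t1_deriv: "((\<lambda>t. t1 t x) has_vector_derivative dt1v t x) (at t)"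
  unfolding t1_def dt1v_def ald_def gad_def
  by (intro has_vector_derivative_add has_vector_derivative_mult phi_deriv al_deriv ga_deriv
        op_deriv)

definition R0 :: "real \<Rightarrow> 'a cvec" where
  "R0 t = (\<lambda>x. \<i> * al t * (Pv (op HI (phi t)) x - op HI (Pv (phi t)) x - Pv (Pv (phi t)) x
                 + Pv (op L (phi t)) x - op L (Pv (phi t)) x)
            + \<i> * be t * (Qv (op HI (phi t)) x - op HI (Qv (phi t)) x - Qv (Pv (phi t)) x
                 + Qv (op L (phi t)) x - op L (Qv (phi t)) x))"

lemma ident0: "x \<in> I \<Longrightarrow> du0 t x - dt0v t x =
    - \<i> * (op HI (e0 t) x + op Hel (e0 t) x) + (- \<i> * op HX (e1 t) x) + R0 t x"
  unfolding du0_def dt0v_def e0_def e1_def t0_def t1_def dphi_def R0_def Pv_def Qv_def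
    ald_def bed_def al_def be_def ga_def
  apply (simp only: op_add op_diff op_smul op_E op_commI op_commX op_comm1)
  using om_pos apply (simp add: field_simps)
  done

definition R1 :: "real \<Rightarrow> 'a cvec" where
  "R1 t = (\<lambda>x. \<i> * ga t * (op H1 (op HX (op HI (phi t))) x - op HI (op H1 (op HX (phi t))) x
                 - op H1 (op HX (Pv (phi t))) x + op H1 (op HX (op L (phi t))) x - op L (op H1 (op HX (phi t))) x)
            + \<i> * al t * (op HX (op HI (phi t)) x - op HI (op HX (phi t)) x - op HX (Pv (phi t)) x
                 + op HX (op L (phi t)) x - op L (op HX (phi t)) x)
            - \<i> * al t * op HX (Pv (phi t)) x - \<i> * be t * op HX (Qv (phi t)) x)"

lemma w2_om: "w2 = complex_of_real (om\<^sup>2)"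
  unfolding w2_def om_def by simp

lemma ident1: "x \<in> I \<Longrightarrow> du1 t x - dt1v t x =
    - \<i> * (op HI (e1 t) x + op H1 (e1 t) x + op Hel (e1 t) x) + (- \<i> * op HX (e0 t) x) + R1 t x"
  unfolding du1_def dt1v_def e0_def e1_def t0_def t1_def dphi_def R1_def Pv_def Qv_def
    ald_def gad_def al_def be_def ga_def
  apply (simp only: op_add op_diff op_smul op_E op_commI op_commX op_comm1 op_H1H1 w2_om)
  using om_pos apply (simp add: field_simps)
  done

end

context pset2 begin

definition bnd :: "('a cvec \<Rightarrow> 'a cvec) \<Rightarrow> real \<Rightarrow> bool" where
  "bnd f a \<longleftrightarrow> 0 \<le> a \<and> (\<forall>v. vnorm I (f v) \<le> a * vnorm I v)"

lemma bndD: "bnd f a \<Longrightarrow> vnorm I (f v) \<le> a * vnorm I v"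
  unfolding bnd_def by blast

lemma bnd_nonneg: "bnd f a \<Longrightarrow> 0 \<le> a"
  unfolding bnd_def by blast

lemma bnd_comp: "bnd f a \<Longrightarrow> bnd g b \<Longrightarrow> bnd (\<lambda>v. f (g v)) (a * b)"
proof -
  assume f: "bnd f a" and g: "bnd g b"
  have "vnorm I (f (g v)) \<le> (a * b) * vnorm I v" for v
  proof -
    have "vnorm I (f (g v)) \<le> a * vnorm I (g v)" using f unfolding bnd_def by blast
    also have "\<dots> \<le> a * (b * vnorm I v)" using f g unfolding bnd_def by (intro mult_left_mono) auto
    finally show ?thesis by (simp add: mult.assoc)
  qed
  then show ?thesis using f g unfolding bnd_def by auto
qed

lemma bnd_mono: "bnd f a \<Longrightarrow> a \<le> b \<Longrightarrow> bnd f b"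
proof -
  assume f: "bnd f a" and ab: "a \<le> b"
  have "vnorm I (f v) \<le> b * vnorm I v" for v
  proof -
    have "vnorm I (f v) \<le> a * vnorm I v" using f unfolding bnd_def by blast
    also have "\<dots> \<le> b * vnorm I v" using ab by (intro mult_right_mono) auto
    finally show ?thesis .
  qed
  then show ?thesis using f ab unfolding bnd_def by auto
qed

lemma sdt: "sqrt dt * sqrt dt = dt" using dt0 by simp
lemma sdt_pos: "sqrt dt > 0" using dt0 by simp

lemma bnd_HI: "bnd (op HI) c" unfolding bnd_def using c0 bIo by auto
lemma bnd_HX: "bnd (op HX) (c / sqrt dt)" unfolding bnd_def using c0 bXo sdt_pos by auto
lemma bnd_H1: "bnd (op H1) (c / dt)" unfolding bnd_def using c0 b1o dt0 by auto
lemma bnd_L: "bnd (op L) lc" unfolding bnd_def using lc0 bLo by auto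

lemma pi_ge1: "1 \<le> pi" using pi_gt3 by simp

lemma bnd_smul: "bnd f a \<Longrightarrow> bnd (\<lambda>v x. complex_of_real s * f v x) (\<bar>s\<bar> * a)"
  unfolding bnd_def by (auto simp: vnorm_smul mult.assoc intro: mult_left_mono)

lemma bnd_P: "bnd Pv (c ^ 3)"
proof -
  have "bnd (\<lambda>v. op HX (op H1 (op HX v))) (c / sqrt dt * (c / dt * (c / sqrt dt)))"
    by (intro bnd_comp bnd_HX bnd_H1)
  from bnd_smul[OF this, of "1 / om\<^sup>2"]
  have "bnd Pv (\<bar>1 / om\<^sup>2\<bar> * (c / sqrt dt * (c / dt * (c / sqrt dt))))"
    unfolding Pv_def by simp
  moreover have "\<bar>1 / om\<^sup>2\<bar> * (c / sqrt dt * (c / dt * (c / sqrt dt))) = c ^ 3 / (4 * pi\<^sup>2)"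
    using dt0 sdt unfolding om_def by (simp add: field_simps power2_eq_square power3_eq_cube)
  moreover have "c ^ 3 / (4 * pi\<^sup>2) \<le> c ^ 3"
  proof -
    have "1 * 1 \<le> pi * pi" by (rule mult_mono) (use pi_ge1 in auto)
    then have "1 \<le> 4 * pi\<^sup>2" by (simp add: power2_eq_square)
    then have "c ^ 3 * 1 \<le> c ^ 3 * (4 * pi\<^sup>2)" using c0 by (intro mult_left_mono) auto
    then show ?thesis by (simp add: divide_le_eq)
  qed
  ultimately show ?thesis by (auto intro: bnd_mono)
qed

lemma bnd_Q: "bnd Qv (c ^ 2)"
proof -
  have "bnd (\<lambda>v. op HX (op HX v)) (c / sqrt dt * (c / sqrt dt))"
    by (intro bnd_comp bnd_HX)
  from bnd_smul[OF this, of "1 / om"]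
  have "bnd Qv (\<bar>1 / om\<bar> * (c / sqrt dt * (c / sqrt dt)))"
    unfolding Qv_def by simp
  moreover have "\<bar>1 / om\<bar> * (c / sqrt dt * (c / sqrt dt)) = c ^ 2 / (2 * pi)"
    using dt0 sdt unfolding om_def by (simp add: field_simps power2_eq_square)
  moreover have "c ^ 2 / (2 * pi) \<le> c ^ 2"
  proof -
    have "c ^ 2 * 1 \<le> c ^ 2 * (2 * pi)" by (rule mult_left_mono) (use pi_ge1 in auto)
    then show ?thesis by (simp add: divide_le_eq)
  qed
  ultimately show ?thesis by (auto intro: bnd_mono)
qed

lemma cm_al: "cmod (al t) \<le> dt"
proof -
  have "cmod (al t) = \<bar>sin (om * t)\<bar> / om"
    unfolding al_def norm_mult norm_minus_cancel norm_of_real using om_pos by (simp add: abs_divide)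
  also have "\<dots> \<le> 1 / om" using om_pos by (intro divide_right_mono) auto
  also have "\<dots> = dt / (2 * pi)" unfolding om_def by simp
  also have "\<dots> \<le> dt" using dt0 pi_ge1 by (simp add: divide_le_eq)
  finally show ?thesis .
qed

lemma cm_be: "cmod (be t) \<le> dt"
proof -
  have "cmod (be t) = \<bar>cos (om * t) - 1\<bar> / om"
    unfolding be_def norm_of_real using om_pos by (simp add: abs_divide)
  also have "\<dots> \<le> 2 / om" using om_pos by (intro divide_right_mono) (auto simp: abs_le_iff)
  also have "\<dots> = dt / pi" unfolding om_def by simp
  also have "\<dots> \<le> dt" using dt0 pi_ge1 by (simp add: divide_le_eq)
  finally show ?thesis .
qed

lemma cm_ga: "cmod (ga t) \<le> dt\<^sup>2"
proof -
  have "cmod (ga t) = \<bar>cos (om * t) - 1\<bar> / om\<^sup>2"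
    unfolding ga_def norm_of_real using om_pos by (simp add: abs_divide)
  also have "\<dots> \<le> 2 / om\<^sup>2" using om_pos by (intro divide_right_mono) (auto simp: abs_le_iff)
  also have "\<dots> = dt\<^sup>2 / (2 * pi\<^sup>2)" unfolding om_def by (simp add: power2_eq_square)
  also have "\<dots> \<le> dt\<^sup>2"
  proof -
    have "1 * 1 \<le> pi * pi" by (rule mult_mono) (use pi_ge1 in auto)
    then have "1 \<le> 2 * pi\<^sup>2" by (simp add: power2_eq_square)
    then have "dt\<^sup>2 * 1 \<le> dt\<^sup>2 * (2 * pi\<^sup>2)" by (intro mult_left_mono) auto
    then show ?thesis by (simp add: divide_le_eq)
  qed
  finally show ?thesis .
qed

lemma vnorm5: "vnorm I (\<lambda>x. a1 x - a2 x - a3 x + a4 x - a5 x)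
   \<le> vnorm I a1 + vnorm I a2 + vnorm I a3 + vnorm I a4 + vnorm I a5"
proof -
  have "vnorm I (\<lambda>x. a1 x - a2 x - a3 x + a4 x - a5 x) \<le> vnorm I (\<lambda>x. a1 x - a2 x - a3 x + a4 x) + vnorm I a5"
    by (rule vnorm_diff)
  moreover have "vnorm I (\<lambda>x. a1 x - a2 x - a3 x + a4 x) \<le> vnorm I (\<lambda>x. a1 x - a2 x - a3 x) + vnorm I a4"
    by (rule vnorm_add)
  moreover have "vnorm I (\<lambda>x. a1 x - a2 x - a3 x) \<le> vnorm I (\<lambda>x. a1 x - a2 x) + vnorm I a3"
    by (rule vnorm_diff)
  moreover have "vnorm I (\<lambda>x. a1 x - a2 x) \<le> vnorm I a1 + vnorm I a2"
    by (rule vnorm_diff)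
  ultimately show ?thesis by linarith
qed

lemma vnorm_sm: "vnorm I (\<lambda>x. \<i> * a * v x) = cmod a * vnorm I v"
  using vnorm_smul[of I "\<i> * a" v] by (simp add: norm_mult mult.assoc)

end

context pset2 begin

definition S1 :: real where "S1 = 2 * c + c ^ 3 + 2 * lc"
definition K0 :: real where "K0 = c ^ 3 * S1 + c ^ 2 * S1"
definition K1 :: real where "K1 = c ^ 2 * S1 + c * S1 + c ^ 4 + c ^ 3"

lemma S1_nonneg: "0 \<le> S1" unfolding S1_def using c0 lc0 by simp

lemma bracket_bound:
  assumes A: "bnd A a" and HI': "bnd HIo c" and L': "bnd Lo lc"
  shows "vnorm I (\<lambda>x. A (HIo v) x - HIo (A v) x - A (Pv v) x + A (Lo v) x - Lo (A v) x)
         \<le> a * S1 * vnorm I v"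
proof -
  have a0: "0 \<le> a" using A by (rule bnd_nonneg)
  have "vnorm I (\<lambda>x. A (HIo v) x - HIo (A v) x - A (Pv v) x + A (Lo v) x - Lo (A v) x)
       \<le> vnorm I (A (HIo v)) + vnorm I (HIo (A v)) + vnorm I (A (Pv v)) + vnorm I (A (Lo v)) + vnorm I (Lo (A v))"
    by (rule vnorm5)
  also have "\<dots> \<le> (a * c) * vnorm I v + (c * a) * vnorm I v + (a * c ^ 3) * vnorm I v
      + (a * lc) * vnorm I v + (lc * a) * vnorm I v"
    by (intro add_mono bndD bnd_comp A HI' L' bnd_P)
  also have "\<dots> = a * S1 * vnorm I v" unfolding S1_def by (simp add: algebra_simps)
  finally show ?thesis .
qed

lemma R0_bound: "vnorm I (R0 t) \<le> dt * K0 * vnorm I (phi t)"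
proof -
  let ?p = "phi t"
  have b1: "vnorm I (\<lambda>x. Pv (op HI ?p) x - op HI (Pv ?p) x - Pv (Pv ?p) x + Pv (op L ?p) x - op L (Pv ?p) x)
     \<le> c ^ 3 * S1 * vnorm I ?p"
    by (rule bracket_bound[OF bnd_P bnd_HI bnd_L])
  have b2: "vnorm I (\<lambda>x. Qv (op HI ?p) x - op HI (Qv ?p) x - Qv (Pv ?p) x + Qv (op L ?p) x - op L (Qv ?p) x)
     \<le> c ^ 2 * S1 * vnorm I ?p"
    by (rule bracket_bound[OF bnd_Q bnd_HI bnd_L])
  define B1 where "B1 = (\<lambda>x. Pv (op HI ?p) x - op HI (Pv ?p) x - Pv (Pv ?p) x + Pv (op L ?p) x - op L (Pv ?p) x)"
  define B2 where "B2 = (\<lambda>x. Qv (op HI ?p) x - op HI (Qv ?p) x - Qv (Pv ?p) x + Qv (op L ?p) x - op L (Qv ?p) x)"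
  note b1 = b1[folded B1_def] and b2 = b2[folded B2_def]
  have R: "R0 t = (\<lambda>x. \<i> * al t * B1 x + \<i> * be t * B2 x)" unfolding R0_def B1_def B2_def by simp
  have "vnorm I (R0 t) \<le> vnorm I (\<lambda>x. \<i> * al t * B1 x) + vnorm I (\<lambda>x. \<i> * be t * B2 x)"
    unfolding R by (rule vnorm_add)
  also have "\<dots> = cmod (al t) * vnorm I B1 + cmod (be t) * vnorm I B2" by (simp only: vnorm_sm)
  finally have "vnorm I (R0 t) \<le> cmod (al t) * vnorm I B1 + cmod (be t) * vnorm I B2" .
  also have "\<dots> \<le> dt * (c ^ 3 * S1 * vnorm I ?p) + dt * (c ^ 2 * S1 * vnorm I ?p)"
    by (intro add_mono mult_mono cm_al cm_be b1 b2) (use dt0 in auto)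
  also have "\<dots> = dt * K0 * vnorm I ?p" unfolding K0_def by (simp add: algebra_simps)
  finally show ?thesis .
qed

lemma R1_bound: "vnorm I (R1 t) \<le> sqrt dt * K1 * vnorm I (phi t)"
proof -
  let ?p = "phi t"
  let ?X = "c / dt * (c / sqrt dt)" and ?Y = "c / sqrt dt"
  have bHX1: "bnd (\<lambda>v. op H1 (op HX v)) ?X" by (intro bnd_comp bnd_H1 bnd_HX)
  have bA: "vnorm I (\<lambda>x. op H1 (op HX (op HI ?p)) x - op HI (op H1 (op HX ?p)) x
                 - op H1 (op HX (Pv ?p)) x + op H1 (op HX (op L ?p)) x - op L (op H1 (op HX ?p)) x)
     \<le> ?X * S1 * vnorm I ?p"
    by (rule bracket_bound[OF bHX1 bnd_HI bnd_L])
  have bB: "vnorm I (\<lambda>x. op HX (op HI ?p) x - op HI (op HX ?p) x - op HX (Pv ?p) x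
                 + op HX (op L ?p) x - op L (op HX ?p) x)
     \<le> ?Y * S1 * vnorm I ?p"
    by (rule bracket_bound[OF bnd_HX bnd_HI bnd_L])
  have bC: "vnorm I (op HX (Pv ?p)) \<le> (?Y * c ^ 3) * vnorm I ?p" by (intro bndD bnd_comp bnd_HX bnd_P)
  have bD: "vnorm I (op HX (Qv ?p)) \<le> (?Y * c ^ 2) * vnorm I ?p" by (intro bndD bnd_comp bnd_HX bnd_Q)
  have Xn: "0 \<le> ?X" using c0 dt0 by simp
  have Yn: "0 \<le> ?Y" using c0 dt0 by simp
  define BA where "BA = (\<lambda>x. op H1 (op HX (op HI ?p)) x - op HI (op H1 (op HX ?p)) x
                 - op H1 (op HX (Pv ?p)) x + op H1 (op HX (op L ?p)) x - op L (op H1 (op HX ?p)) x)"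
  define BB where "BB = (\<lambda>x. op HX (op HI ?p) x - op HI (op HX ?p) x - op HX (Pv ?p) x
                 + op HX (op L ?p) x - op L (op HX ?p) x)"
  note bA = bA[folded BA_def] and bB = bB[folded BB_def]
  have R: "R1 t = (\<lambda>x. \<i> * ga t * BA x + \<i> * al t * BB x - \<i> * al t * op HX (Pv ?p) x
      - \<i> * be t * op HX (Qv ?p) x)" unfolding R1_def BA_def BB_def by simp
  have "vnorm I (R1 t) \<le> vnorm I (\<lambda>x. \<i> * ga t * BA x + \<i> * al t * BB x - \<i> * al t * op HX (Pv ?p) x)
      + vnorm I (\<lambda>x. \<i> * be t * op HX (Qv ?p) x)"
    unfolding R by (rule vnorm_diff)
  also have "vnorm I (\<lambda>x. \<i> * ga t * BA x + \<i> * al t * BB x - \<i> * al t * op HX (Pv ?p) x)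
      \<le> vnorm I (\<lambda>x. \<i> * ga t * BA x + \<i> * al t * BB x) + vnorm I (\<lambda>x. \<i> * al t * op HX (Pv ?p) x)"
    by (rule vnorm_diff)
  also have "vnorm I (\<lambda>x. \<i> * ga t * BA x + \<i> * al t * BB x)
      \<le> vnorm I (\<lambda>x. \<i> * ga t * BA x) + vnorm I (\<lambda>x. \<i> * al t * BB x)"
    by (rule vnorm_add)
  finally have "vnorm I (R1 t) \<le>
        cmod (ga t) * vnorm I BA + cmod (al t) * vnorm I BB
      + cmod (al t) * vnorm I (op HX (Pv ?p)) + cmod (be t) * vnorm I (op HX (Qv ?p))"
    by (simp only: vnorm_sm)
  also have "\<dots> \<le> dt\<^sup>2 * (?X * S1 * vnorm I ?p) + dt * (?Y * S1 * vnorm I ?p)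
      + dt * ((?Y * c ^ 3) * vnorm I ?p) + dt * ((?Y * c ^ 2) * vnorm I ?p)"
    by (intro add_mono mult_mono cm_al cm_be cm_ga bA bB bC bD) (use dt0 in auto)
  also have "\<dots> = (dt\<^sup>2 * ?X) * S1 * vnorm I ?p + (dt * ?Y) * S1 * vnorm I ?p
      + (dt * ?Y) * c ^ 3 * vnorm I ?p + (dt * ?Y) * c ^ 2 * vnorm I ?p"
    by (simp add: algebra_simps)
  also have "dt\<^sup>2 * ?X = c ^ 2 * sqrt dt" using sdt dt0 by (simp add: field_simps power2_eq_square)
  also have "dt * ?Y = c * sqrt dt" using sdt dt0 by (simp add: field_simps)
  also have "c ^ 2 * sqrt dt * S1 * vnorm I ?p + c * sqrt dt * S1 * vnorm I ?p
      + c * sqrt dt * c ^ 3 * vnorm I ?p + c * sqrt dt * c ^ 2 * vnorm I ?p = sqrt dt * K1 * vnorm I ?p"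
    unfolding K1_def by (simp add: algebra_simps power_numeral_reduce)
  finally show ?thesis .
qed

lemma phi0: "x \<in> I \<Longrightarrow> phi 0 x = psi x"
  unfolding phi_def using mexp_zero[of x I KK psi] finI by simp

lemma Re_dphi: "Re (ip I (phi t) (dphi t)) = 0"
proof -
  let ?p = "phi t"
  have "ip I ?p (dphi t) = - \<i> * ip I ?p (\<lambda>x. op HI ?p x - Pv ?p x + op Hel ?p x)"
    unfolding dphi_def by (rule ip_smul)
  also have "ip I ?p (\<lambda>x. op HI ?p x - Pv ?p x + op Hel ?p x) = ip I ?p (op HI ?p) - ip I ?p (Pv ?p) + ip I ?p (op Hel ?p)"
    by (simp only: ip_add ip_diff)
  finally have "ip I ?p (dphi t) = - \<i> * (ip I ?p (op HI ?p) - ip I ?p (Pv ?p) + ip I ?p (op Hel ?p))" .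
  moreover have "Im (ip I ?p (op HI ?p)) = 0" by (rule herm_op_real[OF hI])
  moreover have "Im (ip I ?p (op Hel ?p)) = 0" by (rule herm_op_real[OF hE])
  moreover have "Im (ip I ?p (Pv ?p)) = 0"
  proof -
    have "ip I ?p (Pv ?p) = complex_of_real (1 / om\<^sup>2) * ip I ?p (op HX (op H1 (op HX ?p)))"
      unfolding Pv_def by (rule ip_smul)
    also have "ip I ?p (op HX (op H1 (op HX ?p))) = ip I (op HX ?p) (op H1 (op HX ?p))"
      by (rule herm_op_swap[OF hX])
    finally show ?thesis using herm_op_real[OF h1, of "op HX ?p"] by simp
  qed
  ultimately show ?thesis by simp
qed

lemma phi_norm: "vnorm I (phi t) = vnorm I psi"
proof -
  have d: "((\<lambda>t. (vnorm I (phi t))\<^sup>2) has_real_derivative 0) (at t)" for t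
    using nsq_deriv[where f=phi and f'="dphi t" and t=t, OF finI phi_deriv] Re_dphi[of t] by simp
  have "(vnorm I (phi t))\<^sup>2 = (vnorm I (phi 0))\<^sup>2"
    using DERIV_isconst_all[of "\<lambda>t. (vnorm I (phi t))\<^sup>2" t 0] d by blast
  also have "vnorm I (phi 0) = vnorm I psi" by (rule vnorm_cong) (simp add: phi0)
  finally show ?thesis by (simp add: power2_eq_iff_nonneg)
qed

end

context pset2 begin

definition de0 :: "real \<Rightarrow> 'a cvec" where "de0 t = (\<lambda>x. du0 t x - dt0v t x)"
definition de1 :: "real \<Rightarrow> 'a cvec" where "de1 t = (\<lambda>x. du1 t x - dt1v t x)"

lemma e0_deriv: "x \<in> I \<Longrightarrow> ((\<lambda>t. e0 t x) has_vector_derivative de0 t x) (at t)"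
  unfolding e0_def de0_def by (intro has_vector_derivative_diff u0_deriv t0_deriv)

lemma e1_deriv: "x \<in> I \<Longrightarrow> ((\<lambda>t. e1 t x) has_vector_derivative de1 t x) (at t)"
  unfolding e1_def de1_def by (intro has_vector_derivative_diff u1_deriv t1_deriv)

lemma ip_de0: "ip I (e0 t) (de0 t) = ip I (e0 t) (\<lambda>x. - \<i> * op HI (e0 t) x) + ip I (e0 t) (\<lambda>x. - \<i> * op Hel (e0 t) x)
   + ip I (e0 t) (\<lambda>x. - \<i> * op HX (e1 t) x) + ip I (e0 t) (R0 t)"
proof -
  have "ip I (e0 t) (de0 t) = ip I (e0 t) (\<lambda>x. (- \<i> * op HI (e0 t) x + - \<i> * op Hel (e0 t) x)
      + - \<i> * op HX (e1 t) x + R0 t x)"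
    by (rule ip_cong) (simp add: de0_def ident0 algebra_simps)
  then show ?thesis by (simp only: ip_add)
qed

lemma ip_de1: "ip I (e1 t) (de1 t) = ip I (e1 t) (\<lambda>x. - \<i> * op HI (e1 t) x) + ip I (e1 t) (\<lambda>x. - \<i> * op H1 (e1 t) x)
   + ip I (e1 t) (\<lambda>x. - \<i> * op Hel (e1 t) x)
   + ip I (e1 t) (\<lambda>x. - \<i> * op HX (e0 t) x) + ip I (e1 t) (R1 t)"
proof -
  have "ip I (e1 t) (de1 t) = ip I (e1 t) (\<lambda>x. ((- \<i> * op HI (e1 t) x + - \<i> * op H1 (e1 t) x) + - \<i> * op Hel (e1 t) x)
      + - \<i> * op HX (e0 t) x + R1 t x)"
    by (rule ip_cong) (simp add: de1_def ident1 algebra_simps)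
  then show ?thesis by (simp only: ip_add)
qed

definition NN :: real where "NN = vnorm I psi"

lemma NN_nonneg: "0 \<le> NN" unfolding NN_def by simp
lemma K0_nonneg: "0 \<le> K0" unfolding K0_def using S1_nonneg c0 by simp
lemma K1_nonneg: "0 \<le> K1" unfolding K1_def using S1_nonneg c0 by simp

lemma R0_b: "vnorm I (R0 t) \<le> dt * K0 * NN" using R0_bound[of t] phi_norm[of t] unfolding NN_def by simp
lemma R1_b: "vnorm I (R1 t) \<le> sqrt dt * K1 * NN" using R1_bound[of t] phi_norm[of t] unfolding NN_def by simp

lemma omdt: "om * dt = 2 * pi" unfolding om_def using dt0 by simp

lemma al0: "al 0 = 0" unfolding al_def by simp
lemma be0: "be 0 = 0" unfolding be_def by simp
lemma ga0: "ga 0 = 0" unfolding ga_def by simp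
lemma alT: "al dt = 0" unfolding al_def omdt by simp
lemma beT: "be dt = 0" unfolding be_def omdt by simp
lemma gaT: "ga dt = 0" unfolding ga_def omdt by simp

lemma uu0: "x \<in> I \<Longrightarrow> uu 0 (x, a) = tensor_ket0 psi (x, a)"
  unfolding uu_def using mexp_zero[of "(x, a)" JJ Gp "tensor_ket0 psi"] finJ by (simp add: JJ_def)

lemma e0_0: "x \<in> I \<Longrightarrow> e0 0 x = 0"
  unfolding e0_def u0_def t0_def by (simp add: uu0 tensor_ket0_def phi0 al0 be0)

lemma e1_0: "x \<in> I \<Longrightarrow> e1 0 x = 0"
  unfolding e1_def u1_def t1_def by (simp add: uu0 tensor_ket0_def al0 ga0)

lemma vnorm_z: "(\<And>x. x \<in> I \<Longrightarrow> v x = 0) \<Longrightarrow> vnorm I v = 0"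
  using vnorm_cong[of I v "\<lambda>x. 0"] vnorm_zero by simp

lemma q1_bound:
  assumes T: "0 \<le> T"
  shows "sqrt ((vnorm I (e0 T))\<^sup>2 + (vnorm I (e1 T))\<^sup>2) \<le> T * (dt * K0 * NN + sqrt dt * K1 * NN)"
proof (rule gronwall_sqrt[where q = "\<lambda>t. (vnorm I (e0 t))\<^sup>2 + (vnorm I (e1 t))\<^sup>2"
      and q' = "\<lambda>t. 2 * Re (ip I (e0 t) (de0 t)) + 2 * Re (ip I (e1 t) (de1 t))", OF T])
  show "0 \<le> dt * K0 * NN + sqrt dt * K1 * NN"
    using dt0 K0_nonneg K1_nonneg NN_nonneg by simp
  show "((\<lambda>t. (vnorm I (e0 t))\<^sup>2 + (vnorm I (e1 t))\<^sup>2) has_real_derivative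
     2 * Re (ip I (e0 t) (de0 t)) + 2 * Re (ip I (e1 t) (de1 t))) (at t)" for t
    by (intro DERIV_add nsq_deriv[OF finI] e0_deriv e1_deriv)
  show "(vnorm I (e0 0))\<^sup>2 + (vnorm I (e1 0))\<^sup>2 = 0"
    using vnorm_z[of "e0 0", OF e0_0] vnorm_z[of "e1 0", OF e1_0] by simp
  show "0 \<le> (vnorm I (e0 t))\<^sup>2 + (vnorm I (e1 t))\<^sup>2" for t by simp
  show "2 * Re (ip I (e0 t) (de0 t)) + 2 * Re (ip I (e1 t) (de1 t))
     \<le> 2 * sqrt ((vnorm I (e0 t))\<^sup>2 + (vnorm I (e1 t))\<^sup>2) * (dt * K0 * NN + sqrt dt * K1 * NN)" for t
  proof -
    let ?s = "sqrt ((vnorm I (e0 t))\<^sup>2 + (vnorm I (e1 t))\<^sup>2)"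
    have s0: "vnorm I (e0 t) \<le> ?s" by (rule real_le_rsqrt) simp
    have s1: "vnorm I (e1 t) \<le> ?s" by (rule real_le_rsqrt) simp
    have "Re (ip I (e0 t) (de0 t)) + Re (ip I (e1 t) (de1 t)) = Re (ip I (e0 t) (R0 t)) + Re (ip I (e1 t) (R1 t))"
      unfolding ip_de0 ip_de1
      using herm_op_Re0[OF hI, of "e0 t"] herm_op_Re0[OF hE, of "e0 t"]
        herm_op_Re0[OF hI, of "e1 t"] herm_op_Re0[OF hE, of "e1 t"] herm_op_Re0[OF h1, of "e1 t"]
        herm_op_pair[OF hX, of "e0 t" "e1 t"]
      by simp
    also have "\<dots> \<le> vnorm I (e0 t) * vnorm I (R0 t) + vnorm I (e1 t) * vnorm I (R1 t)"
      by (intro add_mono Re_ip_le)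
    also have "\<dots> \<le> ?s * (dt * K0 * NN) + ?s * (sqrt dt * K1 * NN)"
      by (intro add_mono mult_mono s0 s1 R0_b R1_b) auto
    finally show ?thesis by (simp add: algebra_simps)
  qed
qed

lemma e1_bound: "0 \<le> T \<Longrightarrow> vnorm I (e1 T) \<le> T * (dt * K0 * NN + sqrt dt * K1 * NN)"
proof -
  assume T: "0 \<le> T"
  have "vnorm I (e1 T) \<le> sqrt ((vnorm I (e0 T))\<^sup>2 + (vnorm I (e1 T))\<^sup>2)" by (rule real_le_rsqrt) simp
  then show ?thesis using q1_bound[OF T] by linarith
qed

lemma e0_bound: "vnorm I (e0 dt) \<le> dt * (c / sqrt dt * (dt * (dt * K0 * NN + sqrt dt * K1 * NN)) + dt * K0 * NN)"
proof -
  let ?E = "dt * (dt * K0 * NN + sqrt dt * K1 * NN)"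
  let ?K = "c / sqrt dt * ?E + dt * K0 * NN"
  have "sqrt ((vnorm I (e0 dt))\<^sup>2) \<le> dt * ?K"
  proof (rule gronwall_sqrt[where q = "\<lambda>t. (vnorm I (e0 t))\<^sup>2"
      and q' = "\<lambda>t. 2 * Re (ip I (e0 t) (de0 t))"])
    show "0 \<le> dt" using dt0 by simp
    show "0 \<le> ?K" using dt0 K0_nonneg K1_nonneg NN_nonneg c0 by simp
    show "((\<lambda>t. (vnorm I (e0 t))\<^sup>2) has_real_derivative 2 * Re (ip I (e0 t) (de0 t))) (at t)" for t
      by (intro nsq_deriv[OF finI] e0_deriv)
    show "(vnorm I (e0 0))\<^sup>2 = 0" using vnorm_z[of "e0 0", OF e0_0] by simp
    show "0 \<le> (vnorm I (e0 t))\<^sup>2" for t by simp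
    fix t assume t: "0 \<le> t" "t \<le> dt"
    have "Re (ip I (e0 t) (de0 t)) = Re (ip I (e0 t) (\<lambda>x. - \<i> * op HX (e1 t) x)) + Re (ip I (e0 t) (R0 t))"
      unfolding ip_de0 using herm_op_Re0[OF hI, of "e0 t"] herm_op_Re0[OF hE, of "e0 t"] by simp
    also have "\<dots> \<le> vnorm I (e0 t) * vnorm I (\<lambda>x. - \<i> * op HX (e1 t) x) + vnorm I (e0 t) * vnorm I (R0 t)"
      by (intro add_mono Re_ip_le)
    also have "vnorm I (\<lambda>x. - \<i> * op HX (e1 t) x) = vnorm I (op HX (e1 t))"
      using vnorm_smul[of I "- \<i>" "op HX (e1 t)"] by simp
    also have "vnorm I (e0 t) * vnorm I (op HX (e1 t)) + vnorm I (e0 t) * vnorm I (R0 t)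
       \<le> vnorm I (e0 t) * (c / sqrt dt * ?E) + vnorm I (e0 t) * (dt * K0 * NN)"
    proof (intro add_mono mult_left_mono R0_b vnorm_nonneg)
      have "vnorm I (op HX (e1 t)) \<le> c / sqrt dt * vnorm I (e1 t)" by (rule bXo)
      also have "\<dots> \<le> c / sqrt dt * ?E"
      proof (rule mult_left_mono)
        have "vnorm I (e1 t) \<le> t * (dt * K0 * NN + sqrt dt * K1 * NN)" by (rule e1_bound[OF t(1)])
        also have "\<dots> \<le> ?E" using t dt0 K0_nonneg K1_nonneg NN_nonneg
          by (intro mult_right_mono) auto
        finally show "vnorm I (e1 t) \<le> ?E" .
      qed (use c0 dt0 in simp)
      finally show "vnorm I (op HX (e1 t)) \<le> c / sqrt dt * ?E" .
    qed
    finally have fin: "Re (ip I (e0 t) (de0 t)) \<le> vnorm I (e0 t) * (c / sqrt dt * ?E) + vnorm I (e0 t) * (dt * K0 * NN)" .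
    have eqK: "vnorm I (e0 t) * (c / sqrt dt * ?E) + vnorm I (e0 t) * (dt * K0 * NN) = vnorm I (e0 t) * ?K"
      by (simp only: distrib_left)
    have f2: "2 * Re (ip I (e0 t) (de0 t)) \<le> 2 * (vnorm I (e0 t) * ?K)" using fin eqK by linarith
    have sq: "sqrt ((vnorm I (e0 t))\<^sup>2) = vnorm I (e0 t)" by simp
    show "2 * Re (ip I (e0 t) (de0 t)) \<le> 2 * sqrt ((vnorm I (e0 t))\<^sup>2) * ?K"
      using f2 by (simp only: sq mult.assoc)
  qed
  then show ?thesis by simp
qed

lemma u1_final: "vnorm I (u1 dt) \<le> (K0 + K1) * dt powr (3/2) * NN"
proof -
  have "u1 dt = e1 dt" unfolding e1_def t1_def by (simp add: alT gaT)
  then have "vnorm I (u1 dt) \<le> dt * (dt * K0 * NN + sqrt dt * K1 * NN)"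
    using e1_bound[of dt] dt0 by simp
  also have "\<dots> \<le> dt * (sqrt dt * K0 * NN + sqrt dt * K1 * NN)"
  proof -
    have "dt \<le> sqrt dt" using dt0 dt1 by (simp add: real_le_rsqrt power2_eq_square mult_le_cancel_left1 less_imp_le)
    then show ?thesis using dt0 K0_nonneg NN_nonneg
      by (intro mult_left_mono add_mono mult_right_mono) auto
  qed
  also have "\<dots> = (K0 + K1) * (dt * sqrt dt) * NN" by (simp add: algebra_simps)
  also have "dt * sqrt dt = dt powr (3/2)"
  proof -
    have "dt powr (1 + 1/2) = dt powr 1 * dt powr (1/2)" by (rule powr_add)
    then have "dt powr (3/2) = dt * dt powr (1/2)" using dt0 by simp
    also have "\<dots> = dt * sqrt dt" using dt0 by (simp add: powr_half_sqrt)
    finally show ?thesis by simp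
  qed
  finally show ?thesis .
qed

lemma u0_final: "vnorm I (\<lambda>x. u0 dt x - phi dt x) \<le> (c * K0 + c * K1 + K0) * dt\<^sup>2 * NN"
proof -
  have "(\<lambda>x. u0 dt x - phi dt x) = e0 dt" unfolding e0_def t0_def by (simp add: alT beT)
  then have "vnorm I (\<lambda>x. u0 dt x - phi dt x) \<le> dt * (c / sqrt dt * (dt * (dt * K0 * NN + sqrt dt * K1 * NN)) + dt * K0 * NN)"
    using e0_bound by simp
  also have "c / sqrt dt * (dt * (dt * K0 * NN + sqrt dt * K1 * NN)) = c * sqrt dt * dt * K0 * NN + c * dt * K1 * NN"
    using sdt dt0 by (simp add: field_simps)
  also have "dt * (c * sqrt dt * dt * K0 * NN + c * dt * K1 * NN + dt * K0 * NN) \<le> dt * (c * dt * K0 * NN + c * dt * K1 * NN + dt * K0 * NN)"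
  proof -
    have "sqrt dt \<le> 1" using dt1 dt0 by simp
    then have "c * sqrt dt * dt * K0 * NN \<le> c * 1 * dt * K0 * NN"
      using c0 dt0 K0_nonneg NN_nonneg by (intro mult_right_mono mult_left_mono) auto
    then show ?thesis using dt0 by (intro mult_left_mono) auto
  qed
  also have "\<dots> = (c * K0 + c * K1 + K0) * dt\<^sup>2 * NN" by (simp add: algebra_simps power2_eq_square)
  finally show ?thesis .
qed

end

lemma configs_finite: "finite (configs n d)"
proof -
  let ?E = "\<lambda>f::nat \<Rightarrow> nat. \<lambda>i. if i < n then f i else 0"
  have "configs n d \<subseteq> ?E ` (PiE {..<n} (\<lambda>i. {..<d i}))"
  proof
    fix x assume x: "x \<in> configs n d"
    have "restrict x {..<n} \<in> PiE {..<n} (\<lambda>i. {..<d i})" using x by (auto simp: configs_def)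
    moreover have "x = ?E (restrict x {..<n})" using x by (auto simp: configs_def)
    ultimately show "x \<in> ?E ` (PiE {..<n} (\<lambda>i. {..<d i}))" by blast
  qed
  moreover have "finite (?E ` (PiE {..<n} (\<lambda>i. {..<d i})))" by (intro finite_imageI finite_PiE) auto
  ultimately show ?thesis by (rule finite_subset)
qed

lemma sum_single:
  assumes "finite C" "m \<in> C" "\<And>z. z \<in> C \<Longrightarrow> z \<noteq> m \<Longrightarrow> f z = 0"
  shows "sum f C = f m"
proof -
  have "sum f C = f m + sum f (C - {m})" using assms by (simp add: sum.remove)
  also have "sum f (C - {m}) = 0" using assms by (intro sum.neutral) auto
  finally show ?thesis by simp
qed

lemma mapply_sumM: "mapply I (\<lambda>x y. \<Sum>j\<in>T. h j x y) v = (\<lambda>x. \<Sum>j\<in>T. mapply I (h j) v x)"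
proof (rule ext)
  fix x
  have "(\<Sum>y\<in>I. (\<Sum>j\<in>T. h j x y) * v y) = (\<Sum>y\<in>I. \<Sum>j\<in>T. h j x y * v y)"
    by (simp add: sum_distrib_right)
  also have "\<dots> = (\<Sum>j\<in>T. \<Sum>y\<in>I. h j x y * v y)" by (rule sum.swap)
  finally show "mapply I (\<lambda>x y. \<Sum>j\<in>T. h j x y) v x = (\<Sum>j\<in>T. mapply I (h j) v x)"
    unfolding mapply_def .
qed

lemma vnorm_sum: "vnorm I (\<lambda>x. \<Sum>j\<in>T. f j x) \<le> (\<Sum>j\<in>T. vnorm I (f j))"
proof (induction T rule: infinite_finite_induct)
  case (infinite T) then show ?case by (simp add: vnorm_zero)
next
  case empty then show ?case by (simp add: vnorm_zero)
next
  case (insert j T)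
  have "vnorm I (\<lambda>x. \<Sum>j\<in>insert j T. f j x) = vnorm I (\<lambda>x. f j x + (\<Sum>j\<in>T. f j x))"
    using insert by simp
  also have "\<dots> \<le> vnorm I (f j) + vnorm I (\<lambda>x. \<Sum>j\<in>T. f j x)" by (rule vnorm_add)
  also have "\<dots> \<le> vnorm I (f j) + (\<Sum>j\<in>T. vnorm I (f j))" using insert by simp
  finally show ?case using insert by simp
qed

lemma hermitian_sum: "(\<And>j. j \<in> T \<Longrightarrow> hermitian I (h j)) \<Longrightarrow> hermitian I (\<lambda>x y. \<Sum>j\<in>T. h j x y)"
proof -
  assume h: "\<And>j. j \<in> T \<Longrightarrow> hermitian I (h j)"
  show ?thesis unfolding hermitian_def
  proof (intro ballI)
    fix x y assume xy: "x \<in> I" "y \<in> I"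
    have "(\<Sum>j\<in>T. h j y x) = (\<Sum>j\<in>T. cnj (h j x y))"
    proof (rule sum.cong)
      fix j assume "j \<in> T"
      then have "hermitian I (h j)" by (rule h)
      then show "h j y x = cnj (h j x y)" using xy unfolding hermitian_def by blast
    qed simp
    then show "(\<Sum>j\<in>T. h j y x) = cnj (\<Sum>j\<in>T. h j x y)" by (simp add: cnj_sum)
  qed
qed

lemma acts_mult:
  assumes hA: "acts_on n d A h" and hB: "acts_on n d B X" and dis: "A \<inter> B = {}"
    and x: "x \<in> configs n d" and y: "y \<in> configs n d"
  shows "(\<Sum>z\<in>configs n d. h x z * X z y) = (\<Sum>z\<in>configs n d. X x z * h z y)"
proof -
  let ?C = "configs n d"
  obtain Bh where Bh: "\<And>x y. x \<in> ?C \<Longrightarrow> y \<in> ?C \<Longrightarrow> h x y = (if (\<forall>i<n. i \<notin> A \<longrightarrow> x i = y i)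
      then Bh (\<lambda>i. if i \<in> A then x i else 0) (\<lambda>i. if i \<in> A then y i else 0) else 0)"
    using hA unfolding acts_on_def by blast
  obtain BX where BX: "\<And>x y. x \<in> ?C \<Longrightarrow> y \<in> ?C \<Longrightarrow> X x y = (if (\<forall>i<n. i \<notin> B \<longrightarrow> x i = y i)
      then BX (\<lambda>i. if i \<in> B then x i else 0) (\<lambda>i. if i \<in> B then y i else 0) else 0)"
    using hB unfolding acts_on_def by blast
  define m1 where "m1 = (\<lambda>i. if i \<in> A then y i else x i)"
  define m2 where "m2 = (\<lambda>i. if i \<in> B then y i else x i)"
  define cnd where "cnd = (\<forall>i<n. i \<notin> A \<longrightarrow> i \<notin> B \<longrightarrow> x i = y i)"
  have m1C: "m1 \<in> ?C" using x y unfolding m1_def configs_def by auto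
  have m2C: "m2 \<in> ?C" using x y unfolding m2_def configs_def by auto
  have s1: "(\<Sum>z\<in>?C. h x z * X z y) = h x m1 * X m1 y"
  proof (rule sum_single[OF configs_finite m1C])
    fix z assume z: "z \<in> ?C" "z \<noteq> m1"
    then obtain i where i: "z i \<noteq> m1 i" by blast
    have "i < n"
    proof (rule ccontr)
      assume "\<not> i < n"
      then have "z i = 0" "x i = 0" "y i = 0" using z x y unfolding configs_def by auto
      then show False using i unfolding m1_def by (cases "i \<in> A") auto
    qed
    show "h x z * X z y = 0"
    proof (cases "i \<in> A")
      case True
      then have "i \<notin> B" using dis by auto
      then have "X z y = 0" using BX[OF z(1) y] i True \<open>i < n\<close> unfolding m1_def by auto
      then show ?thesis by simp
    next
      case False
      then have "h x z = 0" using Bh[OF x z(1)] i \<open>i < n\<close> unfolding m1_def by auto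
      then show ?thesis by simp
    qed
  qed
  have s2: "(\<Sum>z\<in>?C. X x z * h z y) = X x m2 * h m2 y"
  proof (rule sum_single[OF configs_finite m2C])
    fix z assume z: "z \<in> ?C" "z \<noteq> m2"
    then obtain i where i: "z i \<noteq> m2 i" by blast
    have "i < n"
    proof (rule ccontr)
      assume "\<not> i < n"
      then have "z i = 0" "x i = 0" "y i = 0" using z x y unfolding configs_def by auto
      then show False using i unfolding m2_def by (cases "i \<in> B") auto
    qed
    show "X x z * h z y = 0"
    proof (cases "i \<in> B")
      case True
      then have "i \<notin> A" using dis by auto
      then have "h z y = 0" using Bh[OF z(1) y] i True \<open>i < n\<close> unfolding m2_def by auto
      then show ?thesis by simp
    next
      case False
      then have "X x z = 0" using BX[OF x z(1)] i \<open>i < n\<close> unfolding m2_def by auto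
      then show ?thesis by simp
    qed
  qed
  have rA1: "(\<lambda>i. if i \<in> A then m1 i else 0) = (\<lambda>i. if i \<in> A then y i else 0)" unfolding m1_def by auto
  have rB1: "(\<lambda>i. if i \<in> B then m1 i else 0) = (\<lambda>i. if i \<in> B then x i else 0)" using dis unfolding m1_def by (auto intro!: ext)
  have rA2: "(\<lambda>i. if i \<in> A then m2 i else 0) = (\<lambda>i. if i \<in> A then x i else 0)" using dis unfolding m2_def by (auto intro!: ext)
  have rB2: "(\<lambda>i. if i \<in> B then m2 i else 0) = (\<lambda>i. if i \<in> B then y i else 0)" unfolding m2_def by auto
  have a1: "(\<forall>i<n. i \<notin> A \<longrightarrow> x i = m1 i)" unfolding m1_def by auto
  have a2: "(\<forall>i<n. i \<notin> B \<longrightarrow> x i = m2 i)" unfolding m2_def by auto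
  have c1: "(\<forall>i<n. i \<notin> B \<longrightarrow> m1 i = y i) = cnd" using dis unfolding m1_def cnd_def by auto
  have c2: "(\<forall>i<n. i \<notin> A \<longrightarrow> m2 i = y i) = cnd" using dis unfolding m2_def cnd_def by auto
  have "h x m1 * X m1 y = (if cnd then Bh (\<lambda>i. if i \<in> A then x i else 0) (\<lambda>i. if i \<in> A then y i else 0)
          * BX (\<lambda>i. if i \<in> B then x i else 0) (\<lambda>i. if i \<in> B then y i else 0) else 0)"
    unfolding Bh[OF x m1C] BX[OF m1C y] rA1 rB1 c1 using a1 by simp
  also have "\<dots> = X x m2 * h m2 y"
    unfolding Bh[OF m2C y] BX[OF x m2C] rA2 rB2 c2 using a2 by simp
  finally show ?thesis using s1 s2 by simp
qed

lemma acts_comm_apply: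
  assumes "acts_on n d A h" "acts_on n d B X" "A \<inter> B = {}" "x \<in> configs n d"
  shows "mapply (configs n d) h (mapply (configs n d) X v) x = mapply (configs n d) X (mapply (configs n d) h v) x"
proof -
  have "mapply (configs n d) h (mapply (configs n d) X v) x = mapply (configs n d) (mmul (configs n d) h X) v x"
    by (simp add: mapply_mmul configs_finite)
  also have "\<dots> = mapply (configs n d) (mmul (configs n d) X h) v x"
    unfolding mapply_def mmul_def using acts_mult[OF assms(1,2,3,4)] by simp
  also have "\<dots> = mapply (configs n d) X (mapply (configs n d) h v) x"
    by (simp add: mapply_mmul configs_finite)
  finally show ?thesis .
qed

definition CS1 :: "real \<Rightarrow> real \<Rightarrow> real" where "CS1 c lc = 2 * c + c ^ 3 + 2 * lc"
definition CK0 :: "real \<Rightarrow> real \<Rightarrow> real" where "CK0 c lc = c ^ 3 * CS1 c lc + c ^ 2 * CS1 c lc"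
definition CK1 :: "real \<Rightarrow> real \<Rightarrow> real" where "CK1 c lc = c ^ 2 * CS1 c lc + c * CS1 c lc + c ^ 4 + c ^ 3"
definition Cf :: "real \<Rightarrow> real \<Rightarrow> real" where
  "Cf c lc = (c * CK0 c lc + c * CK1 c lc + CK0 c lc) + (CK0 c lc + CK1 c lc) + 1"

lemma Cf_pos: "0 \<le> c \<Longrightarrow> 0 \<le> lc \<Longrightarrow> 0 < Cf c lc"
proof -
  assume c: "0 \<le> c" and l: "0 \<le> lc"
  have s: "0 \<le> CS1 c lc" unfolding CS1_def using c l by simp
  have k0: "0 \<le> CK0 c lc" unfolding CK0_def using c s by simp
  have k1: "0 \<le> CK1 c lc" unfolding CK1_def using c s by simp
  have "0 \<le> c * CK0 c lc" "0 \<le> c * CK1 c lc" using c k0 k1 by simp_all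
  then show ?thesis unfolding Cf_def using k0 k1 by linarith
qed

lemma mapply_vsum: "mapply I M (\<lambda>y. \<Sum>j\<in>T. f j y) x = (\<Sum>j\<in>T. mapply I M (f j) x)"
  unfolding mapply_def by (simp add: sum_distrib_left sum.swap[of _ I])

context pset2 begin

lemma fin0: "vnorm I (\<lambda>x. u0 dt x - phi dt x) \<le> Cf c lc * dt\<^sup>2 * NN"
proof -
  have "c * K0 + c * K1 + K0 \<le> Cf c lc"
    unfolding Cf_def K0_def K1_def S1_def CK0_def CK1_def CS1_def using c0 lc0 by simp
  then have "(c * K0 + c * K1 + K0) * dt\<^sup>2 * NN \<le> Cf c lc * dt\<^sup>2 * NN"
    using NN_nonneg by (intro mult_right_mono) auto
  then show ?thesis using u0_final by linarith
qed

lemma fin1: "vnorm I (u1 dt) \<le> Cf c lc * dt powr (3/2) * NN"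
proof -
  have "K0 + K1 \<le> Cf c lc"
    unfolding Cf_def K0_def K1_def S1_def CK0_def CK1_def CS1_def using c0 lc0 by simp
  then have "(K0 + K1) * dt powr (3/2) * NN \<le> Cf c lc * dt powr (3/2) * NN"
    using NN_nonneg by (intro mult_right_mono) auto
  then show ?thesis using u1_final by linarith
qed

end

theorem proposition3p5:
  fixes k D s d :: nat and c :: real
  shows "\<exists>C \<delta>0 :: real. C > 0 \<and> \<delta>0 > 0 \<and>
   (\<forall>(n::nat) (dims::nat \<Rightarrow> nat) (T::nat set) (supp::nat \<Rightarrow> nat set)
      (h::nat \<Rightarrow> (nat \<Rightarrow> nat) cmat) (HI::(nat \<Rightarrow> nat) cmat) (HX::(nat \<Rightarrow> nat) cmat)
      (H1::(nat \<Rightarrow> nat) cmat) (S::nat set) (\<delta>t::real) (\<psi>::(nat \<Rightarrow> nat) cvec).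
    let I = configs n dims;
        J = I \<times> (UNIV :: bool set);
        \<omega> = 2 * pi / \<delta>t;
        Helse = (\<lambda>x y. \<Sum>j\<in>T. h j x y);
        H = madd HI (msmul (- complex_of_real (1 / \<omega>\<^sup>2)) (mmul I (mmul I HX H1) HX));
        Hp = madd (kron HI mid) (madd (kron HX pauliX) (kron H1 proj1));
        \<Phi> = mapply J (mexp J (msmul (- \<i> * complex_of_real \<delta>t) (madd Hp (kron Helse mid))))
              (tensor_ket0 \<psi>)
    in
    ((\<forall>i<n. 1 \<le> dims i \<and> dims i \<le> d) \<and> finite T \<and>
     (\<forall>j\<in>T. supp j \<subseteq> {..<n} \<and> card (supp j) \<le> k \<and> acts_on n dims (supp j) (h j) \<and>
             hermitian I (h j) \<and> opnorm I (h j) \<le> c) \<and>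
     (\<forall>i<n. card {j\<in>T. i \<in> supp j} \<le> D) \<and>
     S \<subseteq> {..<n} \<and> card S \<le> s \<and>
     acts_on n dims S HI \<and> acts_on n dims S HX \<and> acts_on n dims S H1 \<and>
     hermitian I HI \<and> hermitian I HX \<and> hermitian I H1 \<and>
     0 < \<delta>t \<and> \<delta>t < \<delta>0 \<and>
     opnorm I HI \<le> c \<and> opnorm I HX \<le> c * \<delta>t powr (-1/2) \<and> opnorm I H1 \<le> c / \<delta>t \<and>
     mat_eq_on I (mmul I H1 H1) (msmul (complex_of_real (\<omega>\<^sup>2)) mid))
    \<longrightarrow>
    (vnorm I (\<lambda>x. \<Phi> (x, False)
                   - mapply I (mexp I (msmul (- \<i> * complex_of_real \<delta>t) (madd H Helse))) \<psi> x)
       \<le> C * \<delta>t\<^sup>2 * vnorm I \<psi> \<and>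
     vnorm I (\<lambda>x. \<Phi> (x, True)) \<le> C * \<delta>t powr (3/2) * vnorm I \<psi>))"
proof -
  let ?cc = "\<bar>c\<bar>" and ?lc = "real (s * D) * \<bar>c\<bar>"
  have Cpos: "0 < Cf ?cc ?lc" by (rule Cf_pos) auto
  show ?thesis
    apply (rule exI[of _ "Cf ?cc ?lc"], rule exI[of _ 1])
    apply (intro conjI Cpos, simp)
    apply (intro allI)
    unfolding Let_def
    apply (intro impI)
    apply (elim conjE)
    subgoal premises P for n dims T supp h HI HX H1 S \<delta>t \<psi>
    proof -
      let ?I = "configs n dims"
      let ?He = "\<lambda>x y. \<Sum>j\<in>T. h j x y"
      define near where "near = {j\<in>T. supp j \<inter> S \<noteq> {}}"
      define far where "far = {j\<in>T. supp j \<inter> S = {}}"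
      define L where "L = (\<lambda>x y. \<Sum>j\<in>near. h j x y)"
      define F where "F = (\<lambda>x y. \<Sum>j\<in>far. h j x y)"
      have finT: "finite T" by (rule P(2))
      have Tsplit: "T = near \<union> far" "near \<inter> far = {}" "finite near" "finite far"
        unfolding near_def far_def using finT by auto
      have hj: "\<And>j. j \<in> T \<Longrightarrow> supp j \<subseteq> {..<n} \<and> card (supp j) \<le> k \<and> acts_on n dims (supp j) (h j) \<and>
             hermitian ?I (h j) \<and> opnorm ?I (h j) \<le> c" using P(3) by blast
      have dt0: "0 < \<delta>t" and dt1: "\<delta>t < 1" by (rule P(13), rule P(14))
      have SS: "S \<subseteq> {..<n}" "card S \<le> s" by (rule P(5), rule P(6))
      have deg: "\<And>i. i < n \<Longrightarrow> card {j\<in>T. i \<in> supp j} \<le> D" using P(4) by blast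
      have cnear: "card near \<le> s * D"
      proof -
        have sub: "near \<subseteq> (\<Union>i\<in>S. {j\<in>T. i \<in> supp j})" unfolding near_def by blast
        have finU: "finite (\<Union>i\<in>S. {j\<in>T. i \<in> supp j})" by (rule finite_subset[OF _ finT]) blast
        have "card near \<le> card (\<Union>i\<in>S. {j\<in>T. i \<in> supp j})" by (rule card_mono[OF finU sub])
        also have "\<dots> \<le> (\<Sum>i\<in>S. card {j\<in>T. i \<in> supp j})"
          using SS(1) finite_subset by (intro card_UN_le) blast
        also have "\<dots> \<le> (\<Sum>i\<in>S. D)" using SS(1) deg by (intro sum_mono) auto
        also have "\<dots> = card S * D" by simp
        also have "\<dots> \<le> s * D" using SS(2) by simp
        finally show ?thesis .
      qed
      have powr_eq: "\<delta>t powr (-1/2) = 1 / sqrt \<delta>t"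
        using dt0 by (simp add: powr_minus_divide powr_half_sqrt)
      interpret pset2 ?I HI HX H1 ?He L F \<delta>t ?cc ?lc \<psi>
      proof (unfold_locales)
        show "finite ?I" by (rule configs_finite)
        show "hermitian ?I HI" "hermitian ?I HX" "hermitian ?I H1" by (rule P(10), rule P(11), rule P(12))
        show "hermitian ?I ?He" by (rule hermitian_sum) (use hj in blast)
        show "0 < \<delta>t" "\<delta>t < 1" by (rule dt0, rule dt1)
        show "0 \<le> ?cc" "0 \<le> ?lc" by simp_all
        show "vnorm ?I (mapply ?I HI v) \<le> ?cc * vnorm ?I v" for v
        proof -
          have "vnorm ?I (mapply ?I HI v) \<le> opnorm ?I HI * vnorm ?I v" by (rule opnorm_bound[OF configs_finite])
          also have "\<dots> \<le> ?cc * vnorm ?I v" using P(15) by (intro mult_right_mono) auto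
          finally show ?thesis .
        qed
        show "vnorm ?I (mapply ?I HX v) \<le> ?cc / sqrt \<delta>t * vnorm ?I v" for v
        proof -
          have a: "vnorm ?I (mapply ?I HX v) \<le> opnorm ?I HX * vnorm ?I v" by (rule opnorm_bound[OF configs_finite])
          have o: "opnorm ?I HX \<le> c / sqrt \<delta>t" using P(16) unfolding powr_eq by simp
          have "c / sqrt \<delta>t \<le> ?cc / sqrt \<delta>t" using dt0 by (intro divide_right_mono) auto
          then have "opnorm ?I HX \<le> ?cc / sqrt \<delta>t" using o by linarith
          then have "opnorm ?I HX * vnorm ?I v \<le> ?cc / sqrt \<delta>t * vnorm ?I v" by (intro mult_right_mono) auto
          with a show ?thesis by linarith
        qed
        show "vnorm ?I (mapply ?I H1 v) \<le> ?cc / \<delta>t * vnorm ?I v" for v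
        proof -
          have a: "vnorm ?I (mapply ?I H1 v) \<le> opnorm ?I H1 * vnorm ?I v" by (rule opnorm_bound[OF configs_finite])
          have o: "opnorm ?I H1 \<le> c / \<delta>t" by (rule P(17))
          have "c / \<delta>t \<le> ?cc / \<delta>t" by (rule divide_right_mono) (use dt0 in auto)
          then have "opnorm ?I H1 \<le> ?cc / \<delta>t" using o by linarith
          then have "opnorm ?I H1 * vnorm ?I v \<le> ?cc / \<delta>t * vnorm ?I v" by (intro mult_right_mono) auto
          with a show ?thesis by linarith
        qed
        show "vnorm ?I (mapply ?I L v) \<le> ?lc * vnorm ?I v" for v
        proof -
          have "vnorm ?I (mapply ?I L v) = vnorm ?I (\<lambda>x. \<Sum>j\<in>near. mapply ?I (h j) v x)"
            unfolding L_def mapply_sumM ..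
          also have "\<dots> \<le> (\<Sum>j\<in>near. vnorm ?I (mapply ?I (h j) v))" by (rule vnorm_sum)
          also have "\<dots> \<le> (\<Sum>j\<in>near. ?cc * vnorm ?I v)"
          proof (rule sum_mono)
            fix j assume "j \<in> near"
            then have "j \<in> T" unfolding near_def by blast
            then have "opnorm ?I (h j) \<le> c" using hj by blast
            then have "opnorm ?I (h j) * vnorm ?I v \<le> ?cc * vnorm ?I v" by (intro mult_right_mono) auto
            then show "vnorm ?I (mapply ?I (h j) v) \<le> ?cc * vnorm ?I v"
              using opnorm_bound[OF configs_finite[of n dims], where A="h j" and v=v] by linarith
          qed
          also have "\<dots> = real (card near) * (?cc * vnorm ?I v)" by simp
          also have "\<dots> \<le> real (s * D) * (?cc * vnorm ?I v)"
          proof (rule mult_right_mono)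
            show "real (card near) \<le> real (s * D)" using cnear by (simp only: of_nat_le_iff)
          qed simp
          finally show ?thesis by (simp add: mult.assoc)
        qed
        show "mat_eq_on ?I (mmul ?I H1 H1) (msmul (complex_of_real ((2 * pi / \<delta>t)\<^sup>2)) mid)" by (rule P(18))
        show "mapply ?I ?He v x = mapply ?I L v x + mapply ?I F v x" if "x \<in> ?I" for v x
          unfolding L_def F_def mapply_sumM using Tsplit by (simp add: sum.union_disjoint)
        show "mapply ?I F (mapply ?I HI v) x = mapply ?I HI (mapply ?I F v) x" if x: "x \<in> ?I" for v x
        proof -
          have "mapply ?I F (mapply ?I HI v) x = (\<Sum>j\<in>far. mapply ?I (h j) (mapply ?I HI v) x)"
            unfolding F_def mapply_sumM ..
          also have "\<dots> = (\<Sum>j\<in>far. mapply ?I HI (mapply ?I (h j) v) x)"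
          proof (rule sum.cong[OF refl])
            fix j assume j: "j \<in> far"
            then have "acts_on n dims (supp j) (h j)" "supp j \<inter> S = {}" using hj unfolding far_def by auto
            then show "mapply ?I (h j) (mapply ?I HI v) x = mapply ?I HI (mapply ?I (h j) v) x"
              using acts_comm_apply[of n dims "supp j" "h j" S HI x v] P(7) x by blast
          qed
          also have "\<dots> = mapply ?I HI (mapply ?I F v) x"
            unfolding F_def mapply_sumM mapply_vsum ..
          finally show ?thesis .
        qed
        show "mapply ?I F (mapply ?I HX v) x = mapply ?I HX (mapply ?I F v) x" if x: "x \<in> ?I" for v x
        proof -
          have "mapply ?I F (mapply ?I HX v) x = (\<Sum>j\<in>far. mapply ?I (h j) (mapply ?I HX v) x)"
            unfolding F_def mapply_sumM ..
          also have "\<dots> = (\<Sum>j\<in>far. mapply ?I HX (mapply ?I (h j) v) x)"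
          proof (rule sum.cong[OF refl])
            fix j assume j: "j \<in> far"
            then have "acts_on n dims (supp j) (h j)" "supp j \<inter> S = {}" using hj unfolding far_def by auto
            then show "mapply ?I (h j) (mapply ?I HX v) x = mapply ?I HX (mapply ?I (h j) v) x"
              using acts_comm_apply[of n dims "supp j" "h j" S HX x v] P(8) x by blast
          qed
          also have "\<dots> = mapply ?I HX (mapply ?I F v) x"
            unfolding F_def mapply_sumM mapply_vsum ..
          finally show ?thesis .
        qed
        show "mapply ?I F (mapply ?I H1 v) x = mapply ?I H1 (mapply ?I F v) x" if x: "x \<in> ?I" for v x
        proof -
          have "mapply ?I F (mapply ?I H1 v) x = (\<Sum>j\<in>far. mapply ?I (h j) (mapply ?I H1 v) x)"
            unfolding F_def mapply_sumM ..
          also have "\<dots> = (\<Sum>j\<in>far. mapply ?I H1 (mapply ?I (h j) v) x)"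
          proof (rule sum.cong[OF refl])
            fix j assume j: "j \<in> far"
            then have "acts_on n dims (supp j) (h j)" "supp j \<inter> S = {}" using hj unfolding far_def by auto
            then show "mapply ?I (h j) (mapply ?I H1 v) x = mapply ?I H1 (mapply ?I (h j) v) x"
              using acts_comm_apply[of n dims "supp j" "h j" S H1 x v] P(9) x by blast
          qed
          also have "\<dots> = mapply ?I H1 (mapply ?I F v) x"
            unfolding F_def mapply_sumM mapply_vsum ..
          finally show ?thesis .
        qed
      qed
      note f0 = fin0[unfolded u0_def u1_def uu_def JJ_def Gp_def phi_def KK_def HH_def om_def NN_def]
      note f1 = fin1[unfolded u0_def u1_def uu_def JJ_def Gp_def phi_def KK_def HH_def om_def NN_def]
      show ?thesis by (intro conjI f0 f1)
    qed
    done
qed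

end
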